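(* Let $E$ be a separable Banach space over $K$ with dual $E^*$, let $X$ be an $E$-valued $K$-Gaussian random variable, and set $$S=\{x\in E:|T(x)|\le\|T(X)\|_\infty\ \text{for all }T\in E^*\}.$$ Then: (i) $S$ is a $D$-submodule of $E$. (ii) If $x\in S$ then $x+X$ has the same law as $X$; if $x\notin S$ then the laws of $x+X$ and $X$ are mutually singular. (iii) $S$ is the closed support of the law of $X$. (iv) $S$ is compact. (v) The law of $X$ is normalised Haar measure on $S$. (vi) If $M$ is a measurable vector subspace of $E$, then $\mathbb{P}\{X\in M\}$ equals $1$ if $S\subset M$ and equals $0$ otherwise.
   Context: $K$ is a local field (locally compact, non-discrete, totally disconnected topological field) with its non-archimedean absolute value $|\cdot|$ ($|x|=0\iff x=0$, $|xy|=|x||y|$, $|x+y|\le|x|\vee|y|$); $D=\{x\in K:|x|\le1\}$. A normed space over $K$ is a $K$-vector space $E$ with $\|\cdot\|:E\to[0,\infty)$, $\|x\|=0\iff x=0$, $\|\alpha x\|=|\alpha|\|x\|$, $\|x+y\|\le\|x\|\vee\|y\|$; a Banach space if complete. $E^*$ is the space of continuous $K$-linear functionals $E\to K$. For a $K$-valued random variable $Y$, $\|Y\|_\infty$ is the essential supremum of $|Y|$. $K^2$ is normed by $|(x_1,x_2)|=|x_1|\vee|x_2|$; $v_1,v_2\in K^2$ are orthonormal if $|v_1|=|v_2|=1$ and $|\alpha_1v_1+\alpha_2v_2|=|\alpha_1|\vee|\alpha_2|$ for all $\alpha_i\in K$. An $E$-valued random variable $X$ is $K$-Gaussian if whenever $X_1,X_2$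 are independent copies of $X$ and $(\alpha_{11},\alpha_{12}),(\alpha_{21},\alpha_{22})\in K^2$ are orthonormal, $(\alpha_{11}X_1+\alpha_{12}X_2,\alpha_{21}X_1+\alpha_{22}X_2)$ has the same law as $(X_1,X_2)$. A measurable vector subspace is a $K$-linear subspace that is a Borel set. *)

theory Defs
  imports "HOL-Probability.Probability"
begin

definition nonarch_abs :: "('k::field \<Rightarrow> real) \<Rightarrow> bool" where
  "nonarch_abs absK \<longleftrightarrow>
     (\<forall>x. absK x \<ge> 0) \<and> (\<forall>x. absK x = 0 \<longleftrightarrow> x = 0) \<and>
     (\<forall>x y. absK (x * y) = absK x * absK y) \<and>
     (\<forall>x y. absK (x + y) \<le> max (absK x) (absK y))"

definition local_field :: "('k::{field,metric_space} \<Rightarrow> real) \<Rightarrow> bool" where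
  "local_field absK \<longleftrightarrow>
     nonarch_abs absK \<and>
     (\<forall>x y. dist x y = absK (x - y)) \<and>
     locally compact (UNIV :: 'k set) \<and>
     (\<exists>x::'k. x islimpt UNIV) \<and>
     (\<forall>C::'k set. connected C \<longrightarrow> (\<forall>x\<in>C. \<forall>y\<in>C. x = y))"

definition K_normed_space ::
  "('k::field \<Rightarrow> real) \<Rightarrow> ('k \<Rightarrow> 'e::{ab_group_add,metric_space} \<Rightarrow> 'e) \<Rightarrow> ('e \<Rightarrow> real) \<Rightarrow> bool" where
  "K_normed_space absK smul nrm \<longleftrightarrow>
     vector_space smul \<and>
     (\<forall>x. nrm x \<ge> 0) \<and> (\<forall>x. nrm x = 0 \<longleftrightarrow> x = 0) \<and>
     (\<forall>a x. nrm (smul a x) = absK a * nrm x) \<and>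
     (\<forall>x y. nrm (x + y) \<le> max (nrm x) (nrm y)) \<and>
     (\<forall>x y. dist x y = nrm (x - y))"

definition K_banach_space ::
  "('k::field \<Rightarrow> real) \<Rightarrow> ('k \<Rightarrow> 'e::{ab_group_add,metric_space} \<Rightarrow> 'e) \<Rightarrow> ('e \<Rightarrow> real) \<Rightarrow> bool" where
  "K_banach_space absK smul nrm \<longleftrightarrow> K_normed_space absK smul nrm \<and> Topological_Spaces.complete (UNIV :: 'e set)"

definition separable_space :: "'e::metric_space itself \<Rightarrow> bool" where
  "separable_space _ \<longleftrightarrow> (\<exists>A::'e set. countable A \<and> closure A = UNIV)"

definition dual_space :: "('k::{field,metric_space} \<Rightarrow> 'e::{ab_group_add,metric_space} \<Rightarrow> 'e) \<Rightarrow> ('e \<Rightarrow> 'k) set" where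
  "dual_space smul = {T. Vector_Spaces.linear smul ((*) :: 'k \<Rightarrow> 'k \<Rightarrow> 'k) T \<and> continuous_on UNIV T}"

definition orthonormal2 :: "('k::field \<Rightarrow> real) \<Rightarrow> 'k \<times> 'k \<Rightarrow> 'k \<times> 'k \<Rightarrow> bool" where
  "orthonormal2 absK v w \<longleftrightarrow>
     max (absK (fst v)) (absK (snd v)) = 1 \<and> max (absK (fst w)) (absK (snd w)) = 1 \<and>
     (\<forall>a b. max (absK (a * fst v + b * fst w)) (absK (a * snd v + b * snd w))
              = max (absK a) (absK b))"

text \<open>K-Gaussian: for independent copies X1, X2 of X (whose joint law is the product of the
  law of X with itself) and orthonormal rows (a11,a12), (a21,a22), the pair
  (a11 X1 + a12 X2, a21 X1 + a22 X2) has the same law as (X1, X2).\<close>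
definition K_gaussian ::
  "('k::field \<Rightarrow> real) \<Rightarrow> ('k \<Rightarrow> 'e::{ab_group_add,metric_space} \<Rightarrow> 'e) \<Rightarrow> 'w measure \<Rightarrow> ('w \<Rightarrow> 'e) \<Rightarrow> bool" where
  "K_gaussian absK smul P X \<longleftrightarrow>
     (let \<mu> = distr P borel X in
      \<forall>a11 a12 a21 a22. orthonormal2 absK (a11, a12) (a21, a22) \<longrightarrow>
        distr (\<mu> \<Otimes>\<^sub>M \<mu>) (\<mu> \<Otimes>\<^sub>M \<mu>)
          (\<lambda>(x1, x2). (smul a11 x1 + smul a12 x2, smul a21 x1 + smul a22 x2)) = \<mu> \<Otimes>\<^sub>M \<mu>)"

text \<open>D-submodule, D = closed unit ball of K.\<close>
definition D_submodule ::
  "('k::field \<Rightarrow> real) \<Rightarrow> ('k \<Rightarrow> 'e::ab_group_add \<Rightarrow> 'e) \<Rightarrow> 'e set \<Rightarrow> bool" where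
  "D_submodule absK smul S \<longleftrightarrow>
     0 \<in> S \<and> (\<forall>x\<in>S. \<forall>y\<in>S. x + y \<in> S) \<and> (\<forall>a x. absK a \<le> 1 \<and> x \<in> S \<longrightarrow> smul a x \<in> S)"

definition mutually_singular :: "'a measure \<Rightarrow> 'a measure \<Rightarrow> bool" where
  "mutually_singular M N \<longleftrightarrow>
     (\<exists>A \<in> sets M \<inter> sets N. emeasure M A = 0 \<and> emeasure N (space N - A) = 0)"

definition closed_support :: "'a::topological_space measure \<Rightarrow> 'a set" where
  "closed_support M = {x. \<forall>U. open U \<and> x \<in> U \<longrightarrow> emeasure M U > 0}"

definition normalised_haar_on :: "'e::{ab_group_add,topological_space} set \<Rightarrow> 'e measure \<Rightarrow> bool" where
  "normalised_haar_on S M \<longleftrightarrow>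
     sets M = sets borel \<and> emeasure M S = 1 \<and> emeasure M (space M - S) = 0 \<and>
     (\<forall>x\<in>S. \<forall>A\<in>sets borel. A \<subseteq> S \<longrightarrow> emeasure M ((\<lambda>y. x + y) ` A) = emeasure M A)"

definition measurable_vector_subspace ::
  "('k::field \<Rightarrow> 'e::{ab_group_add,topological_space} \<Rightarrow> 'e) \<Rightarrow> 'e set \<Rightarrow> bool" where
  "measurable_vector_subspace smul M \<longleftrightarrow> module.subspace smul M \<and> M \<in> sets borel"

end

theory Submission
  imports Defs
begin

locale kf =
  fixes absK :: "'k::{field,metric_space} \<Rightarrow> real"
  assumes LF: "local_field absK"
begin

lemma na: "nonarch_abs absK" using LF unfolding local_field_def by blast
lemma abs_nonneg[simp]: "absK x \<ge> 0" using na unfolding nonarch_abs_def by blast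
lemma abs_zero_iff[simp]: "absK x = 0 \<longleftrightarrow> x = 0" using na unfolding nonarch_abs_def by blast
lemma abs_mult: "absK (x * y) = absK x * absK y" using na unfolding nonarch_abs_def by blast
lemma abs_ultra: "absK (x + y) \<le> max (absK x) (absK y)" using na unfolding nonarch_abs_def by blast
lemma distK: "dist x y = absK (x - y)" using LF unfolding local_field_def by blast

lemma abs_zero[simp]: "absK 0 = 0" by simp

lemma abs_one[simp]: "absK 1 = 1"
proof -
  have "absK 1 = absK 1 * absK 1" using abs_mult[of 1 1] by simp
  moreover have "absK 1 \<noteq> 0" by simp
  ultimately show ?thesis by (metis mult_cancel_left1)
qed

lemma abs_pos: "x \<noteq> 0 \<Longrightarrow> absK x > 0"
  using abs_nonneg[of x] abs_zero_iff[of x] by linarith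

lemma abs_minus1[simp]: "absK (-1) = 1"
proof -
  have "absK (-1) * absK (-1) = 1" using abs_mult[of "-1" "-1"] by simp
  hence "(absK (-1))^2 = 1" by (simp add: power2_eq_square)
  thus ?thesis using abs_nonneg[of "-1"] unfolding power2_eq_1_iff by linarith
qed

lemma abs_minus[simp]: "absK (- x) = absK x"
  using abs_mult[of "-1" x] by simp

lemma abs_diff_ultra: "absK (x - y) \<le> max (absK x) (absK y)"
  using abs_ultra[of x "-y"] by simp

lemma abs_inverse: "absK (inverse x) = inverse (absK x)"
proof (cases "x = 0")
  case False
  have "absK x * absK (inverse x) = 1" using abs_mult[of x "inverse x"] False by simp
  thus ?thesis by (metis inverse_unique)
qed simp

lemma abs_power: "absK (x ^ n) = absK x ^ n"
  by (induction n) (simp_all add: abs_mult)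

lemma abs_ultra_eq: "absK x < absK y \<Longrightarrow> absK (x + y) = absK y"
proof -
  assume a: "absK x < absK y"
  have "absK (x + y) \<le> absK y" using abs_ultra[of x y] a by simp
  moreover have "absK y \<le> max (absK (x + y)) (absK x)"
    using abs_diff_ultra[of "x + y" x] by simp
  ultimately show ?thesis using a by linarith
qed

lemma exists_small: "\<exists>t. t \<noteq> 0 \<and> absK t < e" if e: "e > 0"
proof -
  obtain x :: 'k where "x islimpt UNIV" using LF unfolding local_field_def by blast
  then obtain y where "y \<noteq> x" "dist y x < e" using e unfolding islimpt_approachable by blast
  thus ?thesis by (intro exI[of _ "y - x"]) (simp add: distK)
qed

lemma exists_big: "\<exists>s. s \<noteq> 0 \<and> absK s > R"
proof -
  obtain t where t: "t \<noteq> 0" "absK t < 1" using exists_small[of 1] by auto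
  have "1 < inverse (absK t)" using t abs_pos[of t] by (simp add: one_less_inverse)
  then obtain n where "R < inverse (absK t) ^ n" using real_arch_pow by blast
  thus ?thesis using t by (intro exI[of _ "inverse t ^ n"]) (simp add: abs_power abs_inverse)
qed

lemma compact_cball0: "\<exists>r>0. compact (cball (0::'k) r)"
proof -
  have "locally compact (UNIV::'k set)" using LF unfolding local_field_def by blast
  then obtain U V where UV: "openin (top_of_set UNIV) U" "compact V" "(0::'k) \<in> U" "U \<subseteq> V"
    by (rule locallyE[of _ _ UNIV 0]) auto
  then have "open U" by simp
  then obtain r where r: "r > 0" "ball 0 r \<subseteq> U" using UV(3) open_contains_ball by blast
  have "cball (0::'k) (r/2) \<subseteq> V" using r UV(4) by (auto simp: subset_eq)
  then have "compact (V \<inter> cball 0 (r/2))" using UV(2) by (simp add: compact_Int_closed)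
  moreover have "V \<inter> cball 0 (r/2) = cball 0 (r/2)" using \<open>cball 0 (r/2) \<subseteq> V\<close> by blast
  ultimately show ?thesis using r by (intro exI[of _ "r/2"]) auto
qed

lemma compact_cballK: "compact (cball (u::'k) R)"
proof -
  obtain r where r: "r > 0" "compact (cball (0::'k) r)" using compact_cball0 by blast
  obtain s where s: "s \<noteq> 0" "absK s > R / r" using exists_big by blast
  have cont: "continuous_on UNIV (\<lambda>z::'k. u + s * z)"
  proof (rule lipschitz_on_continuous_on)
    show "(absK s)-lipschitz_on UNIV (\<lambda>z::'k. u + s * z)"
      unfolding lipschitz_on_def by (simp add: distK abs_mult right_diff_distrib[symmetric])
  qed
  have "compact ((\<lambda>z. u + s * z) ` cball 0 r)"
    by (rule compact_continuous_image[OF continuous_on_subset[OF cont] r(2)]) auto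
  moreover have "cball u R \<subseteq> (\<lambda>z. u + s * z) ` cball 0 r"
  proof
    fix w assume w: "w \<in> cball u R"
    have "absK ((w - u) / s) = absK (w - u) / absK s"
      by (simp add: divide_inverse abs_mult abs_inverse)
    also have "\<dots> \<le> R / absK s"
    proof -
      have "absK (w - u) \<le> R" using w by (metis distK dist_commute mem_cball)
      thus ?thesis by (simp add: divide_right_mono)
    qed
    also have "\<dots> \<le> r"
    proof -
      have "R < r * absK s" using s r(1) by (simp add: field_simps)
      thus ?thesis using abs_pos[OF s(1)] by (simp add: field_simps)
    qed
    finally have "(w - u) / s \<in> cball 0 r" by (simp add: distK)
    moreover have "w = u + s * ((w - u) / s)" using s(1) by simp
    ultimately show "w \<in> (\<lambda>z. u + s * z) ` cball 0 r" by blast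
  qed
  ultimately show ?thesis by (metis compact_Int_closed inf.absorb_iff2 closed_cball)
qed

lemma abs_commute: "absK (x - y) = absK (y - x)"
  by (metis abs_minus minus_diff_eq)

lemma discrete: "\<exists>p. p \<noteq> 0 \<and> absK p < 1 \<and> (\<forall>l. absK l < 1 \<longrightarrow> absK l \<le> absK p)"
proof -
  obtain t where t: "t \<noteq> 0" "absK t < 1" using exists_small[of 1] by auto
  define Ann where "Ann = cball (0::'k) 1 - ball 0 (absK t)"
  have memA: "l \<in> Ann \<longleftrightarrow> absK l \<le> 1 \<and> absK t \<le> absK l" for l
    unfolding Ann_def by (auto simp: distK)
  have cA: "compact Ann" unfolding Ann_def by (intro compact_diff compact_cballK open_ball)
  have cov: "Ann \<subseteq> (\<Union>l\<in>Ann. ball l (absK l))"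
  proof
    fix l assume "l \<in> Ann"
    then have "absK l > 0" using memA abs_pos[OF t(1)] by force
    then have "l \<in> ball l (absK l)" by simp
    then show "l \<in> (\<Union>l\<in>Ann. ball l (absK l))" using \<open>l \<in> Ann\<close> by blast
  qed
  obtain F where F: "F \<subseteq> Ann" "finite F" "Ann \<subseteq> (\<Union>l\<in>F. ball l (absK l))"
    by (rule compactE_image[OF cA _ cov]) auto
  have const: "absK m = absK l" if "m \<in> ball l (absK l)" for m l
  proof -
    have "absK (m - l) < absK l" using that by (simp add: distK abs_commute)
    then have "absK ((m - l) + l) = absK l" by (rule abs_ultra_eq)
    thus ?thesis by simp
  qed
  have Vsub: "absK ` Ann \<subseteq> absK ` F"
  proof
    fix v assume "v \<in> absK ` Ann"
    then obtain m where m: "m \<in> Ann" "v = absK m" by blast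
    then obtain l where "l \<in> F" "m \<in> ball l (absK l)" using F(3) by blast
    thus "v \<in> absK ` F" using const m by force
  qed
  define V where "V = {v \<in> absK ` Ann. v < 1}"
  have "V \<subseteq> absK ` F" using Vsub unfolding V_def by blast
  then have finV: "finite V" using F(2) by (metis finite_subset finite_imageI)
  have tV: "absK t \<in> V" unfolding V_def using t memA by auto
  have "Max V \<in> V" using finV tV Max_in by blast
  then obtain p where p: "p \<in> Ann" "absK p = Max V" "Max V < 1" unfolding V_def by auto
  have p0: "p \<noteq> 0" using p(1) memA abs_pos[OF t(1)] by force
  show ?thesis
  proof (intro exI[of _ p] conjI allI impI p0)
    show "absK p < 1" using p by simp
    fix l assume l: "absK l < 1"
    show "absK l \<le> absK p"
    proof (cases "absK t \<le> absK l")
      case True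
      then have "absK l \<in> V" unfolding V_def using l memA by auto
      thus ?thesis using p(2) finV by simp
    next
      case False
      thus ?thesis using Max_ge[OF finV tV] p(2) by linarith
    qed
  qed
qed

end

locale ns = kf absK for absK :: "'k::{field,metric_space} \<Rightarrow> real" +
  fixes smul :: "'k \<Rightarrow> 'e::{ab_group_add,metric_space} \<Rightarrow> 'e" and nrm :: "'e \<Rightarrow> real"
  assumes NS: "K_normed_space absK smul nrm"
begin

lemma VS: "vector_space smul" using NS unfolding K_normed_space_def by blast

sublocale V: vector_space smul by (rule VS)

lemma nrm_nonneg[simp]: "nrm x \<ge> 0" using NS unfolding K_normed_space_def by blast
lemma nrm_zero_iff[simp]: "nrm x = 0 \<longleftrightarrow> x = 0" using NS unfolding K_normed_space_def by blast
lemma nrm_smul: "nrm (smul a x) = absK a * nrm x" using NS unfolding K_normed_space_def by blast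
lemma nrm_ultra: "nrm (x + y) \<le> max (nrm x) (nrm y)" using NS unfolding K_normed_space_def by blast
lemma distE: "dist x y = nrm (x - y)" using NS unfolding K_normed_space_def by blast
lemma nrm_zero[simp]: "nrm 0 = 0" by simp

lemma smul_m1: "smul (-1) x = - x"
  by (metis V.scale_minus_left V.scale_one)

lemma nrm_minus[simp]: "nrm (- x) = nrm x"
  using nrm_smul[of "-1" x] by (simp add: smul_m1)

lemma nrm_commute: "nrm (x - y) = nrm (y - x)"
  by (metis nrm_minus minus_diff_eq)

lemma nrm_diff_ultra: "nrm (x - y) \<le> max (nrm x) (nrm y)"
  using nrm_ultra[of x "-y"] by simp

lemma nrm_ultra_eq: "nrm x < nrm y \<Longrightarrow> nrm (x + y) = nrm y"
proof -
  assume a: "nrm x < nrm y"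
  have "nrm (x + y) \<le> nrm y" using nrm_ultra[of x y] a by simp
  moreover have "nrm y \<le> max (nrm (x + y)) (nrm x)"
    using nrm_diff_ultra[of "x + y" x] by simp
  ultimately show ?thesis using a by linarith
qed

lemma nrm_tri3: "nrm (x - z) \<le> max (nrm (x - y)) (nrm (y - z))"
  using nrm_ultra[of "x - y" "y - z"] by simp

lemma ball_eqE: fixes x y :: 'e shows "dist x y < r \<Longrightarrow> ball x r = ball y r"
proof -
  assume a: "dist x y < r"
  have *: "ball u r \<subseteq> ball v r" if "nrm (u - v) < r" for u v :: 'e
  proof
    fix z assume "z \<in> ball u r"
    then have "nrm (u - z) < r" by (simp add: distE)
    then have "nrm (v - z) < r" using nrm_tri3[of v z u] that nrm_commute[of u v] by simp
    thus "z \<in> ball v r" by (simp add: distE)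
  qed
  show ?thesis using *[of x y] *[of y x] a by (simp add: distE nrm_commute)
qed

lemma smul_lip: "dist (smul a x) (smul a y) = absK a * dist x y"
  by (simp add: distE nrm_smul V.scale_right_diff_distrib[symmetric])

lemma cont_smul: "continuous_on UNIV (smul a)"
  by (rule lipschitz_on_continuous_on[of "absK a"]) (simp add: lipschitz_on_def smul_lip)

lemma cont_add: "continuous_on UNIV (\<lambda>y::'e. x + y)"
  by (rule lipschitz_on_continuous_on[of 1]) (simp add: lipschitz_on_def distE)

lemma HB:
  fixes p :: "'e \<Rightarrow> real" and x0 :: 'e and c :: 'k
  assumes p0: "\<And>y. p y \<ge> 0" and pu: "\<And>y z. p (y + z) \<le> max (p y) (p z)"
    and ph: "\<And>a y. p (smul a y) = absK a * p y" and c: "absK c \<le> p x0"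
  shows "\<exists>T. (\<forall>y z. T (y + z) = T y + T z) \<and> (\<forall>a y. T (smul a y) = a * T y) \<and> T x0 = c \<and>
             (\<forall>y. absK (T y) \<le> p y)"
proof -
  have pm: "p (- y) = p y" for y using ph[of "-1" y] by (simp add: smul_m1)
  define good :: "('e \<times> 'k) set \<Rightarrow> bool" where
    "good H \<longleftrightarrow> (x0, c) \<in> H \<and> (\<forall>y a b. (y, a) \<in> H \<longrightarrow> (y, b) \<in> H \<longrightarrow> a = b) \<and>
       (\<forall>y a z b. (y, a) \<in> H \<longrightarrow> (z, b) \<in> H \<longrightarrow> (y + z, a + b) \<in> H) \<and>
       (\<forall>y a l. (y, a) \<in> H \<longrightarrow> (smul l y, l * a) \<in> H) \<and>
       (\<forall>y a. (y, a) \<in> H \<longrightarrow> absK a \<le> p y)" for H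
  define H0 where "H0 = range (\<lambda>l. (smul l x0, l * c))"
  have gH0: "good H0"
  proof -
    have "(x0, c) \<in> H0" unfolding H0_def by (rule range_eqI[of _ _ 1]) simp
    moreover have "a = b" if yab: "(y, a) \<in> H0" "(y, b) \<in> H0" for y a b
    proof -
      obtain l l' where l: "y = smul l x0" "a = l * c" "y = smul l' x0" "b = l' * c"
        using yab unfolding H0_def by blast
      show ?thesis
      proof (cases "x0 = 0")
        case True
        then have "p x0 = 0" using ph[of 0 x0] by simp
        then have "c = 0" using c abs_nonneg[of c] by simp
        thus ?thesis using l by simp
      next
        case False
        have "smul (l - l') x0 = smul l x0 - smul l' x0" by (rule V.scale_left_diff_distrib)
        also have "\<dots> = 0" using l by (metis right_minus_eq)
        finally have "smul (l - l') x0 = 0" .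
        then have "l = l'" using False by simp
        thus ?thesis using l by simp
      qed
    qed
    moreover have "(y + z, a + b) \<in> H0" if yz: "(y, a) \<in> H0" "(z, b) \<in> H0" for y a z b
    proof -
      obtain l l' where l: "y = smul l x0" "a = l * c" "z = smul l' x0" "b = l' * c"
        using yz unfolding H0_def by blast
      have "(y + z, a + b) = (\<lambda>l. (smul l x0, l * c)) (l + l')"
        using l by (simp add: V.scale_left_distrib distrib_right)
      thus ?thesis unfolding H0_def by (rule range_eqI)
    qed
    moreover have "(smul m y, m * a) \<in> H0" if ya: "(y, a) \<in> H0" for y a m
    proof -
      obtain l where l: "y = smul l x0" "a = l * c"
        using ya unfolding H0_def by blast
      have "(smul m y, m * a) = (\<lambda>l. (smul l x0, l * c)) (m * l)"
        using l by simp
      thus ?thesis unfolding H0_def by (rule range_eqI)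
    qed
    moreover have "absK a \<le> p y" if ya: "(y, a) \<in> H0" for y a
    proof -
      obtain l where l: "y = smul l x0" "a = l * c"
        using ya unfolding H0_def by blast
      have "absK a = absK l * absK c" using l by (simp add: abs_mult)
      also have "\<dots> \<le> absK l * p x0" using c by (simp add: mult_left_mono)
      also have "\<dots> = p y" using l by (simp add: ph)
      finally show ?thesis .
    qed
    ultimately show ?thesis unfolding good_def by blast
  qed
  have "\<exists>M\<in>{H. good H}. \<forall>X\<in>{H. good H}. M \<subseteq> X \<longrightarrow> X = M"
  proof (rule Zorn_Lemma2, intro ballI)
    fix C assume C: "C \<in> chains {H. good H}"
    show "\<exists>U\<in>{H. good H}. \<forall>X\<in>C. X \<subseteq> U"
    proof (cases "C = {}")
      case True thus ?thesis using gH0 by blast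
    next
      case False
      have Cg: "\<And>H. H \<in> C \<Longrightarrow> good H" using C unfolding chains_def by blast
      have two: "\<exists>H\<in>C. u \<in> H \<and> v \<in> H" if hh: "u \<in> \<Union>C" "v \<in> \<Union>C" for u v
      proof -
        obtain H1 H2 where "H1 \<in> C" "H2 \<in> C" "u \<in> H1" "v \<in> H2" using hh by blast
        thus ?thesis using chainsD[OF C, of H1 H2] by blast
      qed
      have "good (\<Union>C)"
      proof -
        obtain H where "H \<in> C" using False by blast
        then have "(x0, c) \<in> \<Union>C" using Cg unfolding good_def by blast
        moreover have "\<forall>y a b. (y, a) \<in> \<Union>C \<longrightarrow> (y, b) \<in> \<Union>C \<longrightarrow> a = b"
        proof (intro allI impI)
          fix y a b assume "(y, a) \<in> \<Union>C" "(y, b) \<in> \<Union>C"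
          then obtain H where "H \<in> C" "(y, a) \<in> H" "(y, b) \<in> H" using two by blast
          thus "a = b" using Cg unfolding good_def by blast
        qed
        moreover have "\<forall>y a z b. (y, a) \<in> \<Union>C \<longrightarrow> (z, b) \<in> \<Union>C \<longrightarrow> (y + z, a + b) \<in> \<Union>C"
        proof (intro allI impI)
          fix y a z b assume "(y, a) \<in> \<Union>C" "(z, b) \<in> \<Union>C"
          then obtain H where "H \<in> C" "(y, a) \<in> H" "(z, b) \<in> H" using two by blast
          thus "(y + z, a + b) \<in> \<Union>C" using Cg unfolding good_def by blast
        qed
        moreover have "\<forall>y a l. (y, a) \<in> \<Union>C \<longrightarrow> (smul l y, l * a) \<in> \<Union>C"
          using Cg unfolding good_def by blast
        moreover have "\<forall>y a. (y, a) \<in> \<Union>C \<longrightarrow> absK a \<le> p y"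
          using Cg unfolding good_def by blast
        ultimately show ?thesis unfolding good_def by blast
      qed
      thus ?thesis by blast
    qed
  qed
  then obtain M where gM: "good M" and maxM: "\<And>X. good X \<Longrightarrow> M \<subseteq> X \<Longrightarrow> X = M" by blast
  have Mx0: "(x0, c) \<in> M" and Mfun: "\<And>y a b. (y, a) \<in> M \<Longrightarrow> (y, b) \<in> M \<Longrightarrow> a = b"
    and Madd: "\<And>y a z b. (y, a) \<in> M \<Longrightarrow> (z, b) \<in> M \<Longrightarrow> (y + z, a + b) \<in> M"
    and Msc: "\<And>y a l. (y, a) \<in> M \<Longrightarrow> (smul l y, l * a) \<in> M"
    and Mb: "\<And>y a. (y, a) \<in> M \<Longrightarrow> absK a \<le> p y"
    using gM unfolding good_def by blast+
  have M00: "(0, 0) \<in> M" using Msc[OF Mx0, of 0] by simp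
  have Mdiff: "(y - z, a - b) \<in> M" if "(y, a) \<in> M" "(z, b) \<in> M" for y a z b
    using Madd[OF that(1) Msc[OF that(2), of "-1"]] by (simp add: smul_m1)
  have dom: "\<exists>a. (y, a) \<in> M" for y
  proof (rule ccontr)
    assume ny: "\<not> (\<exists>a. (y, a) \<in> M)"
    define f where "f = (\<lambda>(z::'e, b::'k). cball (- b) (p (z + y)))"
    have pair: "absK ((- b1) - (- b2)) \<le> max (p (z1 + y)) (p (z2 + y))"
      if "(z1, b1) \<in> M" "(z2, b2) \<in> M" for z1 b1 z2 b2
    proof -
      have "absK (b1 - b2) \<le> p (z1 - z2)" using Mb[OF Mdiff[OF that]] .
      also have "p (z1 - z2) = p ((z1 + y) + - (z2 + y))" by (simp add: algebra_simps)
      also have "\<dots> \<le> max (p (z1 + y)) (p (- (z2 + y)))" by (rule pu)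
      also have "p (- (z2 + y)) = p (z2 + y)" by (rule pm)
      finally show ?thesis by (simp add: abs_commute)
    qed
    have "cball 0 (p y) \<inter> \<Inter> (f ` M) \<noteq> {}"
    proof (rule compact_imp_fip_image)
      show "compact (cball (0::'k) (p y))" by (rule compact_cballK)
      show "closed (f i)" for i unfolding f_def by (cases i) auto
      fix I' assume I': "finite I'" "I' \<subseteq> M"
      define J where "J = insert (0, 0) I'"
      have J: "finite J" "J \<noteq> {}" "J \<subseteq> M" using I' M00 unfolding J_def by auto
      define r where "r = (\<lambda>(z::'e, b::'k). p (z + y))"
      define m where "m = Min (r ` J)"
      have "m \<in> r ` J" unfolding m_def using J by simp
      then obtain j where j: "j \<in> J" "r j = m" by blast
      obtain zj bj where zbj: "j = (zj, bj)" by (cases j)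
      have jmin: "r j \<le> r i" if "i \<in> J" for i using j that J unfolding m_def by simp
      have inall: "- bj \<in> f i" if "i \<in> J" for i
      proof -
        obtain zi bi where zbi: "i = (zi, bi)" by (cases i)
        have "absK ((- bi) - (- bj)) \<le> max (p (zi + y)) (p (zj + y))"
          using pair[of zi bi zj bj] that j J zbi zbj by auto
        also have "\<dots> = p (zi + y)" using jmin[OF that] zbi zbj unfolding r_def by auto
        finally show ?thesis unfolding f_def zbi by (simp add: distK)
      qed
      have "- bj \<in> cball 0 (p y)" using inall[of "(0,0)"] unfolding J_def f_def by simp
      moreover have "- bj \<in> \<Inter> (f ` I')" using inall unfolding J_def by auto
      ultimately show "cball 0 (p y) \<inter> \<Inter> (f ` I') \<noteq> {}" by blast
    qed
    then obtain d where d: "\<And>z b. (z, b) \<in> M \<Longrightarrow> d \<in> cball (- b) (p (z + y))"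
      unfolding f_def by fastforce
    have dB: "absK (b + d) \<le> p (z + y)" if "(z, b) \<in> M" for z b
    proof -
      have "absK (- b - d) \<le> p (z + y)" using d[OF that] by (simp add: distK)
      moreover have "- b - d = - (b + d)" by simp
      ultimately show ?thesis by (metis abs_minus)
    qed
    define M' where "M' = {(z + smul l y, b + l * d) | z b l. (z, b) \<in> M}"
    have "good M'"
    proof -
      have "(x0, c) \<in> M'" unfolding M'_def using Mx0 by force
      moreover have "a1 = a2" if hh: "(w, a1) \<in> M'" "(w, a2) \<in> M'" for w a1 a2
      proof -
        obtain z1 b1 l1 where 1: "w = z1 + smul l1 y" "a1 = b1 + l1 * d" "(z1, b1) \<in> M"
          using hh(1) unfolding M'_def by blast
        obtain z2 b2 l2 where 2: "w = z2 + smul l2 y" "a2 = b2 + l2 * d" "(z2, b2) \<in> M"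
          using hh(2) unfolding M'_def by blast
        have l: "l1 = l2"
        proof (rule ccontr)
          assume ne: "l1 \<noteq> l2"
          have "smul (l2 - l1) y = z1 - z2" using 1 2
            by (simp add: V.scale_left_diff_distrib algebra_simps)
          then have "smul (inverse (l2 - l1)) (smul (l2 - l1) y) = smul (inverse (l2 - l1)) (z1 - z2)"
            by simp
          moreover have "smul (inverse (l2 - l1)) (smul (l2 - l1) y) = y" using ne by simp
          ultimately have "y = smul (inverse (l2 - l1)) (z1 - z2)" by simp
          moreover have "(smul (inverse (l2 - l1)) (z1 - z2), inverse (l2 - l1) * (b1 - b2)) \<in> M"
            using Msc[OF Mdiff[OF 1(3) 2(3)]] .
          ultimately show False using ny by metis
        qed
        then have "z1 = z2" using 1 2 by simp
        then have "b1 = b2" using Mfun 1 2 by blast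
        thus ?thesis using 1 2 l by simp
      qed
      moreover have "(w1 + w2, a1 + a2) \<in> M'" if hh: "(w1, a1) \<in> M'" "(w2, a2) \<in> M'" for w1 a1 w2 a2
      proof -
        obtain z1 b1 l1 where 1: "w1 = z1 + smul l1 y" "a1 = b1 + l1 * d" "(z1, b1) \<in> M"
          using hh(1) unfolding M'_def by blast
        obtain z2 b2 l2 where 2: "w2 = z2 + smul l2 y" "a2 = b2 + l2 * d" "(z2, b2) \<in> M"
          using hh(2) unfolding M'_def by blast
        have "w1 + w2 = (z1 + z2) + smul (l1 + l2) y" "a1 + a2 = (b1 + b2) + (l1 + l2) * d"
          using 1 2 by (simp_all add: V.scale_left_distrib algebra_simps)
        thus ?thesis using Madd[OF 1(3) 2(3)] unfolding M'_def by blast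
      qed
      moreover have "(smul m w, m * a) \<in> M'" if hh: "(w, a) \<in> M'" for w a m
      proof -
        obtain z b l where 1: "w = z + smul l y" "a = b + l * d" "(z, b) \<in> M"
          using hh unfolding M'_def by blast
        have "smul m w = smul m z + smul (m * l) y" "m * a = m * b + (m * l) * d"
          using 1 by (simp_all add: V.scale_right_distrib algebra_simps)
        thus ?thesis using Msc[OF 1(3)] unfolding M'_def by blast
      qed
      moreover have "absK a \<le> p w" if hh: "(w, a) \<in> M'" for w a
      proof -
        obtain z b l where 1: "w = z + smul l y" "a = b + l * d" "(z, b) \<in> M"
          using hh unfolding M'_def by blast
        show ?thesis
        proof (cases "l = 0")
          case True thus ?thesis using 1 Mb by simp
        next
          case False
          have "absK (inverse l * b + d) \<le> p (smul (inverse l) z + y)"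
            using dB[OF Msc[OF 1(3), of "inverse l"]] .
          then have "absK l * absK (inverse l * b + d) \<le> absK l * p (smul (inverse l) z + y)"
            by (simp add: mult_left_mono)
          moreover have "absK l * absK (inverse l * b + d) = absK a"
            using False 1 by (simp add: abs_mult[symmetric] algebra_simps)
          moreover have "absK l * p (smul (inverse l) z + y) = p w"
            using False 1 by (simp add: ph[symmetric] V.scale_right_distrib)
          ultimately show ?thesis by simp
        qed
      qed
      ultimately show ?thesis unfolding good_def by blast
    qed
    moreover have "M \<subseteq> M'"
    proof
      fix u assume "u \<in> M"
      then obtain z b where "u = (z, b)" "(z, b) \<in> M" by (cases u) auto
      moreover have "u = (z + smul 0 y, b + 0 * d)" using \<open>u = (z, b)\<close> by simp
      ultimately show "u \<in> M'" unfolding M'_def by blast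
    qed
    ultimately have "M' = M" using maxM by blast
    moreover have "(y, d) \<in> M'"
    proof -
      have "(y, d) = (0 + smul 1 y, 0 + 1 * d)" by simp
      thus ?thesis unfolding M'_def using M00 by blast
    qed
    ultimately show False using ny by blast
  qed
  define T where "T y = (THE a. (y, a) \<in> M)" for y
  have TM: "(y, T y) \<in> M" for y
  proof -
    have "\<exists>!a. (y, a) \<in> M" using dom[of y] Mfun by blast
    thus ?thesis unfolding T_def by (rule theI')
  qed
  have Teq: "T y = a" if "(y, a) \<in> M" for y a using Mfun[OF TM that] .
  show ?thesis
  proof (intro exI[of _ T] conjI allI)
    show "T (y + z) = T y + T z" for y z using Teq[OF Madd[OF TM TM]] .
    show "T (smul a y) = a * T y" for a y using Teq[OF Msc[OF TM]] .
    show "T x0 = c" using Teq[OF Mx0] .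
    show "absK (T y) \<le> p y" for y using Mb[OF TM] .
  qed
qed

end

context ns
begin

lemma module_smul: "module smul"
  using VS unfolding vector_space_def module_def by auto

lemma linear_dual:
  assumes add: "\<And>y z. T (y + z) = T y + T z" and sc: "\<And>a y. T (smul a y) = a * T y"
  shows "Vector_Spaces.linear smul ((*) :: 'k \<Rightarrow> 'k \<Rightarrow> 'k) T"
  unfolding Vector_Spaces.linear_def module_hom_def module_hom_axioms_def
  using VS module_smul vector_space_over_itself.vector_space_axioms
    vector_space_over_itself.module_axioms add sc by blast

lemma separate:
  fixes G :: "'e set" and x :: 'e
  assumes Gc: "closed G" and G0: "0 \<in> G" and Gadd: "\<And>u v. u \<in> G \<Longrightarrow> v \<in> G \<Longrightarrow> u + v \<in> G"
    and Gsc: "\<And>a u. absK a \<le> 1 \<Longrightarrow> u \<in> G \<Longrightarrow> smul a u \<in> G" and xG: "x \<notin> G"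
  shows "\<exists>T \<in> dual_space smul. (\<forall>g\<in>G. absK (T g) \<le> 1) \<and> absK (T x) > 1"
proof -
  obtain r where r: "r > 0" "ball x r \<inter> G = {}"
  proof -
    have "open (- G)" using Gc by auto
    then obtain r where "r > 0" "ball x r \<subseteq> - G" using xG open_contains_ball by blast
    thus ?thesis using that by blast
  qed
  define A where "A = {g + b | g b. g \<in> G \<and> nrm b < r}"
  have A0: "b \<in> A" if "nrm b < r" for b
  proof -
    have "b = 0 + b" by simp
    thus ?thesis unfolding A_def using G0 that by blast
  qed
  have AG: "g \<in> A" if "g \<in> G" for g
  proof -
    have "g = g + 0" by simp
    thus ?thesis unfolding A_def using r(1) that by fastforce
  qed
  have Aadd: "u + v \<in> A" if "u \<in> A" "v \<in> A" for u v
  proof -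
    obtain g b where 1: "u = g + b" "g \<in> G" "nrm b < r" using \<open>u \<in> A\<close> unfolding A_def by blast
    obtain g' b' where 2: "v = g' + b'" "g' \<in> G" "nrm b' < r" using \<open>v \<in> A\<close> unfolding A_def by blast
    have "u + v = (g + g') + (b + b')" using 1 2 by (simp add: algebra_simps)
    moreover have "nrm (b + b') < r" using nrm_ultra[of b b'] 1 2 by simp
    ultimately show ?thesis unfolding A_def using Gadd[OF 1(2) 2(2)] by blast
  qed
  have Asc: "smul a u \<in> A" if "absK a \<le> 1" "u \<in> A" for a u
  proof -
    obtain g b where 1: "u = g + b" "g \<in> G" "nrm b < r" using \<open>u \<in> A\<close> unfolding A_def by blast
    have "smul a u = smul a g + smul a b" using 1 by (simp add: V.scale_right_distrib)
    moreover have "nrm (smul a b) < r"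
    proof -
      have "nrm (smul a b) = absK a * nrm b" by (rule nrm_smul)
      also have "\<dots> \<le> nrm b" using that(1) by (simp add: mult_left_le_one_le)
      finally show ?thesis using 1 by simp
    qed
    ultimately show ?thesis unfolding A_def using Gsc[OF that(1) 1(2)] by blast
  qed
  have xA: "x \<notin> A"
  proof
    assume "x \<in> A"
    then obtain g b where 1: "x = g + b" "g \<in> G" "nrm b < r" unfolding A_def by blast
    have "dist x g = nrm b" using 1 by (simp add: distE)
    then have "g \<in> ball x r" using 1 by simp
    thus False using r 1 by blast
  qed
  define L where "L y = {absK l | l. l \<noteq> 0 \<and> (\<exists>a\<in>A. y = smul l a)}" for y
  define p where "p y = Inf (L y)" for y
  have Lbdd: "bdd_below (L y)" for y unfolding L_def bdd_below_def
    by (intro exI[of _ 0]) auto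
  have key: "p y \<le> absK l" if "l \<noteq> 0" "nrm y < r * absK l" for y l
  proof -
    have "nrm (smul (inverse l) y) = nrm y / absK l"
      by (simp add: nrm_smul abs_inverse divide_inverse mult.commute)
    also have "\<dots> < r" using that abs_pos[OF that(1)] by (simp add: field_simps)
    finally have "smul (inverse l) y \<in> A" by (rule A0)
    moreover have "y = smul l (smul (inverse l) y)" using that(1) by simp
    ultimately have "absK l \<in> L y" unfolding L_def using that(1) by blast
    thus ?thesis unfolding p_def using Lbdd by (rule cInf_lower)
  qed
  have Lne: "L y \<noteq> {}" for y
  proof -
    obtain l where l: "l \<noteq> 0" "absK l > nrm y / r" using exists_big by blast
    have "nrm (smul (inverse l) y) = nrm y / absK l"
      by (simp add: nrm_smul abs_inverse divide_inverse mult.commute)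
    also have "\<dots> < r" using l abs_pos[OF l(1)] r(1) by (simp add: field_simps)
    finally have "smul (inverse l) y \<in> A" by (rule A0)
    moreover have "y = smul l (smul (inverse l) y)" using l(1) by simp
    ultimately have "absK l \<in> L y" unfolding L_def using l(1) by blast
    thus ?thesis by blast
  qed
  have p0: "p y \<ge> 0" for y unfolding p_def
    by (rule cInf_greatest[OF Lne]) (auto simp: L_def)
  have pG: "p g \<le> 1" if "g \<in> G" for g
  proof -
    have "g = smul 1 g" by simp
    then have "absK 1 \<in> L g" unfolding L_def using AG[OF that] by fastforce
    then have "1 \<in> L g" by simp
    thus ?thesis unfolding p_def using Lbdd by (rule cInf_lower)
  qed
  obtain pi where pi: "pi \<noteq> 0" "absK pi < 1" "\<And>l. absK l < 1 \<Longrightarrow> absK l \<le> absK pi"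
    using discrete by blast
  have px: "absK (inverse pi) \<le> p x"
    unfolding p_def
  proof (rule cInf_greatest[OF Lne])
    fix v assume "v \<in> L x"
    then obtain l a where la: "v = absK l" "l \<noteq> 0" "a \<in> A" "x = smul l a" unfolding L_def by blast
    have "absK l > 1"
    proof (rule ccontr)
      assume "\<not> absK l > 1"
      then have "x \<in> A" using Asc[of l a] la by simp
      thus False using xA by simp
    qed
    then have "absK (inverse l) < 1" by (simp add: abs_inverse inverse_less_1_iff)
    then have "absK (inverse l) \<le> absK pi" by (rule pi(3))
    then have "inverse (absK l) \<le> absK pi" by (simp add: abs_inverse)
    moreover have "0 < inverse (absK l)" using abs_pos[OF la(2)] by simp
    ultimately have "inverse (absK pi) \<le> inverse (inverse (absK l))" by (rule le_imp_inverse_le)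
    then have "inverse (absK pi) \<le> absK l" by simp
    thus "absK (inverse pi) \<le> v" using la by (simp add: abs_inverse)
  qed
  have psc_le: "p (smul m y) \<le> absK m * p y" if "m \<noteq> 0" for m y
  proof -
    have "p (smul m y) / absK m \<le> p y" unfolding p_def
    proof (rule cInf_greatest[OF Lne])
      fix v assume "v \<in> L y"
      then obtain l a where la: "v = absK l" "l \<noteq> 0" "a \<in> A" "y = smul l a" unfolding L_def by blast
      have "smul m y = smul (m * l) a" using la by simp
      moreover have "m * l \<noteq> 0" using la that by simp
      ultimately have "absK (m * l) \<in> L (smul m y)" unfolding L_def using la(3) by blast
      then have "absK m * absK l \<in> L (smul m y)" by (simp add: abs_mult)
      then have "Inf (L (smul m y)) \<le> absK m * absK l" using Lbdd by (rule cInf_lower)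
      thus "Inf (L (smul m y)) / absK m \<le> v" using la pos_divide_le_eq[OF abs_pos[OF that]]
        by (simp add: mult_ac)
    qed
    thus ?thesis using pos_divide_le_eq[OF abs_pos[OF that]] by (simp add: mult_ac)
  qed
  have pzero: "p 0 = 0"
  proof (rule antisym[OF _ p0])
    show "p 0 \<le> 0"
    proof (rule ccontr)
      assume "\<not> p 0 \<le> 0"
      then have "p 0 > 0" by simp
      then obtain l where l: "l \<noteq> 0" "absK l < p 0" using exists_small[of "p 0"] by blast
      have "p 0 \<le> absK l" using key[of l 0] l abs_pos[OF l(1)] r(1) by simp
      thus False using l by simp
    qed
  qed
  have ph: "p (smul m y) = absK m * p y" for m y
  proof (cases "m = 0")
    case True thus ?thesis using pzero by simp
  next
    case False
    have "p y = p (smul (inverse m) (smul m y))" using False by simp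
    also have "\<dots> \<le> absK (inverse m) * p (smul m y)" by (rule psc_le) (use False in simp)
    finally have "p y \<le> inverse (absK m) * p (smul m y)" by (simp only: abs_inverse)
    then have "absK m * p y \<le> absK m * (inverse (absK m) * p (smul m y))"
      by (rule mult_left_mono) simp
    also have "absK m * (inverse (absK m) * p (smul m y)) = p (smul m y)"
      using False by (simp add: mult.assoc[symmetric])
    finally have "absK m * p y \<le> p (smul m y)" .
    thus ?thesis using psc_le[OF False, of y] by linarith
  qed
  have pu: "p (y + z) \<le> max (p y) (p z)" for y z
  proof (rule ccontr)
    assume "\<not> p (y + z) \<le> max (p y) (p z)"
    then have lt: "p y < p (y + z)" "p z < p (y + z)" by auto
    have "\<exists>v\<in>L y. v < p (y + z)" using lt(1) cInf_less_iff[OF Lne Lbdd] unfolding p_def by blast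
    then obtain v1 where v1: "v1 \<in> L y" "v1 < p (y + z)" by blast
    have "\<exists>v\<in>L z. v < p (y + z)" using lt(2) cInf_less_iff[OF Lne Lbdd] unfolding p_def by blast
    then obtain v2 where v2: "v2 \<in> L z" "v2 < p (y + z)" by blast
    obtain l1 a1 where 1: "v1 = absK l1" "l1 \<noteq> 0" "a1 \<in> A" "y = smul l1 a1"
      using v1(1) unfolding L_def by blast
    obtain l2 a2 where 2: "v2 = absK l2" "l2 \<noteq> 0" "a2 \<in> A" "z = smul l2 a2"
      using v2(1) unfolding L_def by blast
    have gen: "p (smul l1 a1 + smul l2 a2) \<le> absK l2"
      if "absK l1 \<le> absK l2" "l2 \<noteq> 0" "a1 \<in> A" "a2 \<in> A" for l1 l2 a1 a2
    proof -
      have "absK (l1 / l2) = absK l1 / absK l2" by (simp add: divide_inverse abs_mult abs_inverse)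
      also have "\<dots> \<le> 1" using that(1) abs_pos[OF that(2)] by (simp add: divide_le_eq_1)
      finally have "absK (l1 / l2) \<le> 1" .
      then have "smul (l1 / l2) a1 + a2 \<in> A" using Asc that Aadd by blast
      moreover have "smul l1 a1 + smul l2 a2 = smul l2 (smul (l1 / l2) a1 + a2)"
        using that(2) by (simp add: V.scale_right_distrib)
      ultimately have "absK l2 \<in> L (smul l1 a1 + smul l2 a2)" unfolding L_def using that(2) by blast
      thus ?thesis unfolding p_def using Lbdd by (rule cInf_lower)
    qed
    have "p (y + z) \<le> max (absK l1) (absK l2)"
    proof (cases "absK l1 \<le> absK l2")
      case True thus ?thesis using gen[of l1 l2 a1 a2] 1 2 by simp
    next
      case False thus ?thesis using gen[of l2 l1 a2 a1] 1 2 by (simp add: add.commute)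
    qed
    thus False using v1 v2 1 2 by simp
  qed
  obtain T where T: "\<And>y z. T (y + z) = T y + T z" "\<And>a y. T (smul a y) = a * T y"
    "T x = inverse pi" "\<And>y. absK (T y) \<le> p y"
    using HB[OF p0 pu ph px] by blast
  have Tdiff: "T y - T z = T (y - z)" for y z
  proof -
    have "T (y - z) = T (y + smul (-1) z)" by (simp add: smul_m1)
    also have "\<dots> = T y + T (smul (-1) z)" by (rule T(1))
    also have "\<dots> = T y + (-1) * T z" by (simp only: T(2))
    also have "\<dots> = T y - T z" by simp
    finally show ?thesis by simp
  qed
  have cont: "continuous_on UNIV T"
    unfolding continuous_on_iff
  proof (intro ballI allI impI)
    fix y :: 'e and e :: real assume e: "e > 0"
    obtain l where l: "l \<noteq> 0" "absK l < e" using exists_small[OF e] by blast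
    show "\<exists>d>0. \<forall>y'\<in>UNIV. dist y' y < d \<longrightarrow> dist (T y') (T y) < e"
    proof (intro exI[of _ "r * absK l"] conjI ballI impI)
      show "r * absK l > 0" using r(1) abs_pos[OF l(1)] by simp
      fix y' assume "dist y' y < r * absK l"
      then have "p (y' - y) \<le> absK l" using key[OF l(1)] by (simp add: distE)
      then have "absK (T (y' - y)) \<le> absK l" using T(4) order_trans by blast
      thus "dist (T y') (T y) < e" using l by (simp add: distK Tdiff)
    qed
  qed
  have "T \<in> dual_space smul" unfolding dual_space_def using linear_dual[OF T(1,2)] cont by blast
  moreover have "\<forall>g\<in>G. absK (T g) \<le> 1" using T(4) pG order_trans by blast
  moreover have "absK (T x) > 1" using T(3) pi abs_pos[OF pi(1)]
    by (simp add: abs_inverse one_less_inverse)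
  ultimately show ?thesis by blast
qed

end

locale gs = ns absK smul nrm
  for absK :: "'k::{field,metric_space} \<Rightarrow> real" and smul :: "'k \<Rightarrow> 'e::{ab_group_add,metric_space} \<Rightarrow> 'e"
    and nrm :: "'e \<Rightarrow> real" +
  fixes P :: "'w measure" and X :: "'w \<Rightarrow> 'e"
  assumes sep: "separable_space TYPE('e)" and Pp: "prob_space P" and Xm: "X \<in> P \<rightarrow>\<^sub>M borel"
    and gauss: "K_gaussian absK smul P X" and compl: "Topological_Spaces.complete (UNIV :: 'e set)"
begin

definition Q :: "'e set" where "Q = (SOME Q. countable Q \<and> closure Q = UNIV)"

lemma Q: "countable Q" "closure Q = UNIV"
proof -
  have "\<exists>Q::'e set. countable Q \<and> closure Q = UNIV" using sep unfolding separable_space_def by blast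
  then have "countable Q \<and> closure Q = UNIV" unfolding Q_def by (rule someI_ex)
  thus "countable Q" "closure Q = UNIV" by auto
qed

lemma Q_dense: "r > 0 \<Longrightarrow> \<exists>d\<in>Q. dist d x < r"
proof -
  assume "r > 0"
  have "x \<in> closure Q" using Q(2) by simp
  thus ?thesis using \<open>r > 0\<close> unfolding closure_approachable by blast
qed

lemma Q_ne: "Q \<noteq> {}"
  using Q_dense[of 1 0] by auto

definition Cg :: "'e set set" where
  "Cg = insert {} ((\<lambda>(d, q). ball d q) ` (Q \<times> {q \<in> \<rat>. q > 0}))"

lemma Cg_countable: "countable Cg"
  unfolding Cg_def using Q(1)
  by (intro countable_insert countable_image countable_SIGMA) (auto intro: countable_subset[OF _ countable_rat])

lemma open_basis: "open U \<Longrightarrow> x \<in> U \<Longrightarrow> \<exists>d q. d \<in> Q \<and> q \<in> \<rat> \<and> q > 0 \<and> x \<in> ball d q \<and> ball d q \<subseteq> U"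
proof -
  assume U: "open U" "x \<in> U"
  then obtain r where r: "r > 0" "ball x r \<subseteq> U" using open_contains_ball by blast
  obtain q where q: "q \<in> \<rat>" "0 < q" "q < r" using Rats_dense_in_real[OF r(1)] by blast
  obtain d where d: "d \<in> Q" "dist d x < q" using Q_dense[OF q(2)] by blast
  have "ball d q = ball x q" using ball_eqE[OF d(2)] .
  moreover have "ball x q \<subseteq> ball x r" using q by auto
  ultimately show ?thesis using d q r by (intro exI[of _ d] exI[of _ q]) auto
qed

lemma Cg_basis: "topological_basis Cg"
  unfolding topological_basis_def
proof (intro conjI allI impI ballI)
  show "open b" if "b \<in> Cg" for b using that unfolding Cg_def by auto
  fix U :: "'e set" assume U: "open U"
  show "\<exists>B'\<subseteq>Cg. \<Union> B' = U"
  proof (intro exI[of _ "{b \<in> Cg. b \<subseteq> U}"] conjI)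
    show "{b \<in> Cg. b \<subseteq> U} \<subseteq> Cg" by blast
    show "\<Union> {b \<in> Cg. b \<subseteq> U} = U"
    proof
      show "\<Union> {b \<in> Cg. b \<subseteq> U} \<subseteq> U" by blast
      show "U \<subseteq> \<Union> {b \<in> Cg. b \<subseteq> U}"
      proof
        fix x assume "x \<in> U"
        then obtain d q where dq: "d \<in> Q" "q \<in> \<rat>" "q > 0" "x \<in> ball d q" "ball d q \<subseteq> U"
          using open_basis U by blast
        then have "ball d q \<in> Cg" unfolding Cg_def by force
        thus "x \<in> \<Union> {b \<in> Cg. b \<subseteq> U}" using dq by blast
      qed
    qed
  qed
qed

lemma borel_Cg: "borel = sigma UNIV Cg"
  by (rule borel_eq_countable_basis[OF Cg_countable Cg_basis])

lemma sets_borel_Cg: "sets borel = sigma_sets UNIV Cg"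
  by (subst borel_Cg) (simp add: sets_measure_of)

lemma ball_int: "ball (a::'e) r \<inter> ball b s = {} \<or> ball a r \<inter> ball b s = ball a r \<or> ball a r \<inter> ball b s = ball b s"
proof (cases "ball a r \<inter> ball b s = {}")
  case False
  then obtain z where z: "dist a z < r" "dist b z < s" by auto
  show ?thesis
  proof (cases "r \<le> s")
    case True
    have "dist a b < s" using z True nrm_tri3[of a b z] nrm_commute[of b z] by (simp add: distE)
    then have "ball a s = ball b s" by (rule ball_eqE)
    moreover have "ball a r \<subseteq> ball a s" using True by auto
    ultimately show ?thesis by blast
  next
    case False
    have "dist b a < r" using z False nrm_tri3[of b a z] nrm_commute[of a z] by (simp add: distE)
    then have "ball b r = ball a r" by (rule ball_eqE)
    moreover have "ball b s \<subseteq> ball b r" using False by auto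
    ultimately show ?thesis by blast
  qed
qed simp

lemma Cg_Int_stable: "Int_stable Cg"
  unfolding Int_stable_def
proof (intro ballI)
  fix A B assume "A \<in> Cg" "B \<in> Cg"
  then show "A \<inter> B \<in> Cg"
  proof (cases "A = {} \<or> B = {}")
    case True thus ?thesis unfolding Cg_def by auto
  next
    case False
    then obtain a r b s where AB: "A = ball a r" "B = ball b s"
      using \<open>A \<in> Cg\<close> \<open>B \<in> Cg\<close> unfolding Cg_def by auto
    have "{} \<in> Cg" unfolding Cg_def by simp
    thus ?thesis using ball_int[of a r b s] \<open>A \<in> Cg\<close> \<open>B \<in> Cg\<close> unfolding AB by metis
  qed
qed

lemma measure_eq_balls:
  fixes M N :: "'e measure"
  assumes sM: "sets M = sets borel" and sN: "sets N = sets borel" and fin: "emeasure M UNIV \<noteq> \<infinity>"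
    and eq: "\<And>c r. r > 0 \<Longrightarrow> emeasure M (ball c r) = emeasure N (ball c r)"
  shows "M = N"
proof -
  obtain d0 where d0: "d0 \<in> Q" using Q_ne by blast
  show ?thesis
  proof (rule measure_eqI_generator_eq[OF Cg_Int_stable _ _ _ _ _ _ ])
    show "Cg \<subseteq> Pow UNIV" by simp
    show "sets M = sigma_sets UNIV Cg" using sM sets_borel_Cg by simp
    show "sets N = sigma_sets UNIV Cg" using sN sets_borel_Cg by simp
    fix A assume "A \<in> Cg"
    then show "emeasure M A = emeasure N A" unfolding Cg_def using eq by auto
  next
    show "range (\<lambda>i. ball d0 (real (Suc i))) \<subseteq> Cg" unfolding Cg_def using d0 by force
    show "(\<Union>i. ball d0 (real (Suc i))) = UNIV"
    proof -
      have "x \<in> ball d0 (real (Suc (nat \<lceil>dist d0 x\<rceil>)))" for x by simp linarith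
      thus ?thesis by blast
    qed
    fix i
    have "emeasure M (ball d0 (real (Suc i))) \<le> emeasure M UNIV"
      by (rule emeasure_mono) (auto simp: sM)
    thus "emeasure M (ball d0 (real (Suc i))) \<noteq> \<infinity>" using fin by (auto simp: top_unique)
  qed
qed

lemma add_measurable:
  fixes M :: "'a measure" and f g :: "'a \<Rightarrow> 'e"
  assumes f: "f \<in> M \<rightarrow>\<^sub>M borel" and g: "g \<in> M \<rightarrow>\<^sub>M borel"
  shows "(\<lambda>w. f w + g w) \<in> M \<rightarrow>\<^sub>M borel"
proof -
  have "(\<lambda>w. f w + g w) \<in> M \<rightarrow>\<^sub>M sigma UNIV Cg"
  proof (rule measurable_measure_of)
    show "Cg \<subseteq> Pow UNIV" by simp
    show "(\<lambda>w. f w + g w) \<in> space M \<rightarrow> UNIV" by simp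
    fix B assume "B \<in> Cg"
    show "(\<lambda>w. f w + g w) -` B \<inter> space M \<in> sets M"
    proof (cases "B = {}")
      case True thus ?thesis by simp
    next
      case False
      then obtain c q where B: "B = ball c q" "q > 0" using \<open>B \<in> Cg\<close> unfolding Cg_def by auto
      have eq: "(\<lambda>w. f w + g w) -` B \<inter> space M =
        (\<Union>e\<in>Q. (f -` ball e q \<inter> space M) \<inter> (g -` ball (c - e) q \<inter> space M))"
      proof (intro equalityI subsetI)
        fix w assume w: "w \<in> (\<lambda>w. f w + g w) -` B \<inter> space M"
        obtain e where e: "e \<in> Q" "dist e (f w) < q" using Q_dense[OF B(2)] by blast
        have "nrm (c - (f w + g w)) < q" using w B by (simp add: distE)
        moreover have "nrm ((c - e) - g w) = nrm ((c - (f w + g w)) + (f w - e))"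
          by (rule arg_cong[where f=nrm]) (simp add: algebra_simps)
        moreover have "nrm (f w - e) < q" using e(2) nrm_commute[of e "f w"] by (simp add: distE)
        ultimately have "nrm ((c - e) - g w) < q"
          using nrm_ultra[of "c - (f w + g w)" "f w - e"] by simp
        thus "w \<in> (\<Union>e\<in>Q. (f -` ball e q \<inter> space M) \<inter> (g -` ball (c - e) q \<inter> space M))"
          using w e by (auto simp: distE)
      next
        fix w assume "w \<in> (\<Union>e\<in>Q. (f -` ball e q \<inter> space M) \<inter> (g -` ball (c - e) q \<inter> space M))"
        then obtain e where e: "w \<in> space M" "nrm (e - f w) < q" "nrm ((c - e) - g w) < q"
          by (auto simp: distE)
        have "nrm (c - (f w + g w)) = nrm ((e - f w) + ((c - e) - g w))"
          by (rule arg_cong[where f=nrm]) (simp add: algebra_simps)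
        then have "nrm (c - (f w + g w)) < q" using nrm_ultra[of "e - f w" "(c - e) - g w"] e by simp
        thus "w \<in> (\<lambda>w. f w + g w) -` B \<inter> space M" using e B by (simp add: distE)
      qed
      show ?thesis unfolding eq
        using f g Q(1) by (intro sets.countable_UN' sets.Int) (auto intro!: measurable_sets)
    qed
  qed
  thus ?thesis using borel_Cg by simp
qed

end

context gs
begin

definition mu :: "'e measure" where "mu = distr P borel X"

lemma sets_mu[simp]: "sets mu = sets borel" unfolding mu_def by simp
lemma space_mu[simp]: "space mu = UNIV" unfolding mu_def by simp
lemma prob_mu: "prob_space mu" unfolding mu_def by (rule prob_space.prob_space_distr[OF Pp Xm])
lemma fin_mu: "finite_measure mu" using prob_mu by (simp add: prob_space_def)
lemma sfin_mu: "sigma_finite_measure mu" using fin_mu by (rule finite_measure.sigma_finite_measure)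
lemma mu_UNIV: "emeasure mu UNIV = 1"
proof -
  have "emeasure mu (space mu) = 1" by (rule prob_space.emeasure_space_1[OF prob_mu])
  thus ?thesis by (simp only: space_mu)
qed
lemma mu_fin: "emeasure mu A \<noteq> \<infinity>"
  using finite_measure.emeasure_finite[OF fin_mu, of A] unfolding infinity_ennreal_def .
lemma mcs: "mu \<rightarrow>\<^sub>M N = borel \<rightarrow>\<^sub>M N" by (rule measurable_cong_sets[OF sets_mu refl])
lemma mcs2: "M \<rightarrow>\<^sub>M mu = M \<rightarrow>\<^sub>M borel" by (rule measurable_cong_sets[OF refl sets_mu])

lemma trans_meas: "(\<lambda>y::'e. t + y) \<in> mu \<rightarrow>\<^sub>M borel"
  unfolding mcs by (rule borel_measurable_continuous_onI[OF cont_add[of t]])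

lemma trans_meas': "(\<lambda>y::'e. t + y) \<in> borel \<rightarrow>\<^sub>M borel"
  using borel_measurable_continuous_onI[OF cont_add[of t]] .

lemma pre_borel: fixes t :: 'e shows "B \<in> sets borel \<Longrightarrow> {y. t + y \<in> B} \<in> sets borel"
  using measurable_sets[OF trans_meas' , of B t] by (simp add: vimage_def)

definition supp :: "'e set" where "supp = closed_support mu"

lemma supp_iff: "x \<in> supp \<longleftrightarrow> (\<forall>U. open U \<and> x \<in> U \<longrightarrow> emeasure mu U > 0)"
  unfolding supp_def closed_support_def by simp

lemma not_supp: "x \<notin> supp \<Longrightarrow> \<exists>U. open U \<and> x \<in> U \<and> emeasure mu U = 0"
  unfolding supp_iff by (auto simp: not_less)

lemma supp_closed: "closed supp"
proof -
  have "open (- supp)"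
  proof (subst open_subopen, intro ballI)
    fix x assume "x \<in> - supp"
    then obtain U where U: "open U" "x \<in> U" "emeasure mu U = 0" using not_supp by blast
    have "U \<subseteq> - supp"
    proof
      fix y assume "y \<in> U"
      show "y \<in> - supp"
      proof
        assume "y \<in> supp"
        then have "emeasure mu U > 0" using U \<open>y \<in> U\<close> unfolding supp_iff by blast
        thus False using U by simp
      qed
    qed
    thus "\<exists>T. open T \<and> x \<in> T \<and> T \<subseteq> - supp" using U by blast
  qed
  thus ?thesis by (simp add: closed_def)
qed

lemma supp_borel: "supp \<in> sets borel" using supp_closed by (rule borel_closed)

lemma supp_null: "emeasure mu (UNIV - supp) = 0"
proof -
  define I where "I = {(d, q). d \<in> Q \<and> q \<in> \<rat> \<and> q > 0 \<and> emeasure mu (ball d q) = 0}"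
  have cI: "countable I"
    by (rule countable_subset[of _ "Q \<times> \<rat>"]) (auto simp: I_def Q(1) countable_rat)
  have nI: "(\<lambda>(d, q). ball d q) i \<in> null_sets mu" if "i \<in> I" for i
    using that unfolding I_def by (auto simp: null_sets_def)
  have "(\<Union>i\<in>I. (\<lambda>(d, q). ball d q) i) \<in> null_sets mu"
    by (rule null_sets_UN'[OF cI nI])
  moreover have "UNIV - supp \<subseteq> (\<Union>i\<in>I. (\<lambda>(d, q). ball d q) i)"
  proof
    fix x assume "x \<in> UNIV - supp"
    then obtain U where U: "open U" "x \<in> U" "emeasure mu U = 0" using not_supp by blast
    then obtain d q where dq: "d \<in> Q" "q \<in> \<rat>" "q > 0" "x \<in> ball d q" "ball d q \<subseteq> U"
      using open_basis by blast
    have "emeasure mu (ball d q) \<le> emeasure mu U" by (rule emeasure_mono) (use dq U in auto)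
    then have "emeasure mu (ball d q) = 0" using U by simp
    then have "(d, q) \<in> I" unfolding I_def using dq by simp
    thus "x \<in> (\<Union>i\<in>I. (\<lambda>(d, q). ball d q) i)" using dq by force
  qed
  moreover have "UNIV - supp \<in> sets mu" using supp_borel by auto
  ultimately have "UNIV - supp \<in> null_sets mu"
    using null_sets_subset by blast
  thus ?thesis by (rule null_setsD1)
qed

lemma mu_supp: "emeasure mu supp = 1"
proof -
  have "emeasure mu supp + emeasure mu (UNIV - supp) = emeasure mu (supp \<union> (UNIV - supp))"
    by (rule plus_emeasure) (use supp_borel in auto)
  thus ?thesis using supp_null mu_UNIV by simp
qed

lemma supp_ne: "supp \<noteq> {}" using mu_supp by auto

lemma orth: "absK a \<le> 1 \<Longrightarrow> orthonormal2 absK (1, 0) (a, 1)"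
  unfolding orthonormal2_def
proof (intro conjI allI)
  assume a: "absK a \<le> 1"
  show "max (absK (fst (1::'k, 0::'k))) (absK (snd (1::'k, 0::'k))) = 1" by simp
  show "max (absK (fst (a, 1::'k))) (absK (snd (a, 1::'k))) = 1" using a by simp
  fix al be :: 'k
  have "absK (be * a) \<le> absK be" using a by (simp add: abs_mult mult_left_le)
  then have 1: "absK (al * 1 + be * a) \<le> max (absK al) (absK be)"
    using abs_ultra[of al "be * a"] by simp
  have "absK al \<le> max (absK (al + be * a)) (absK (be * a))"
    using abs_diff_ultra[of "al + be * a" "be * a"] by simp
  then have 2: "absK al \<le> max (absK (al * 1 + be * a)) (absK be)"
    using \<open>absK (be * a) \<le> absK be\<close> by simp
  show "max (absK (al * fst (1::'k, 0::'k) + be * fst (a, 1))) (absK (al * snd (1::'k, 0::'k) + be * snd (a, 1))) =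
        max (absK al) (absK be)"
    using 1 2 by simp
qed

lemma gauss_a:
  assumes a: "absK a \<le> 1"
  shows "distr (mu \<Otimes>\<^sub>M mu) (mu \<Otimes>\<^sub>M mu) (\<lambda>(x1, x2). (x1, smul a x1 + x2)) = mu \<Otimes>\<^sub>M mu"
proof -
  have "\<forall>a11 a12 a21 a22. orthonormal2 absK (a11, a12) (a21, a22) \<longrightarrow>
        distr (mu \<Otimes>\<^sub>M mu) (mu \<Otimes>\<^sub>M mu)
          (\<lambda>(x1, x2). (smul a11 x1 + smul a12 x2, smul a21 x1 + smul a22 x2)) = mu \<Otimes>\<^sub>M mu"
    using gauss unfolding K_gaussian_def Let_def mu_def by simp
  then have "distr (mu \<Otimes>\<^sub>M mu) (mu \<Otimes>\<^sub>M mu)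
     (\<lambda>(x1, x2). (smul 1 x1 + smul 0 x2, smul a x1 + smul 1 x2)) = mu \<Otimes>\<^sub>M mu"
    using orth[OF a] by blast
  moreover have "(\<lambda>(x1, x2). (smul 1 x1 + smul 0 x2, smul a x1 + smul 1 x2)) =
      (\<lambda>(x1, x2). (x1, smul a x1 + x2))" by (auto simp: fun_eq_iff)
  ultimately show ?thesis by simp
qed

lemma g_meas: "(\<lambda>(x1, x2). (x1, smul a x1 + x2)) \<in> (mu \<Otimes>\<^sub>M mu) \<rightarrow>\<^sub>M (mu \<Otimes>\<^sub>M mu)"
proof -
  have f1: "fst \<in> (mu \<Otimes>\<^sub>M mu) \<rightarrow>\<^sub>M borel" using measurable_fst[of mu mu] unfolding mcs2 .
  have f2: "snd \<in> (mu \<Otimes>\<^sub>M mu) \<rightarrow>\<^sub>M borel" using measurable_snd[of mu mu] unfolding mcs2 .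
  have "(\<lambda>p. smul a (fst p)) \<in> (mu \<Otimes>\<^sub>M mu) \<rightarrow>\<^sub>M borel"
    by (rule measurable_compose[OF f1 borel_measurable_continuous_onI[OF cont_smul]])
  then have "(\<lambda>p. smul a (fst p) + snd p) \<in> (mu \<Otimes>\<^sub>M mu) \<rightarrow>\<^sub>M borel"
    by (rule add_measurable[OF _ f2])
  then have "(\<lambda>p. smul a (fst p) + snd p) \<in> (mu \<Otimes>\<^sub>M mu) \<rightarrow>\<^sub>M mu" unfolding mcs2 .
  then have "(\<lambda>p. (fst p, smul a (fst p) + snd p)) \<in> (mu \<Otimes>\<^sub>M mu) \<rightarrow>\<^sub>M (mu \<Otimes>\<^sub>M mu)"
    by (intro measurable_Pair measurable_fst)
  moreover have "(\<lambda>(x1, x2). (x1, smul a x1 + x2)) = (\<lambda>p. (fst p, smul a (fst p) + snd p))"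
    by (auto simp: fun_eq_iff)
  ultimately show ?thesis by simp
qed

lemma shift_eq:
  fixes s x y c :: 'e
  assumes "absK a \<le> 1" "dist s x < r"
  shows "smul a x + y \<in> ball c r \<longleftrightarrow> smul a s + y \<in> ball c r"
proof -
  have "dist (smul a x + y) (smul a s + y) = absK a * dist x s"
    using smul_lip[of a x s] by (simp add: distE)
  also have "\<dots> \<le> dist x s" using assms(1) by (simp add: mult_left_le_one_le)
  also have "\<dots> < r" using assms(2) by (simp add: dist_commute)
  finally have "ball (smul a x + y) r = ball (smul a s + y) r" by (rule ball_eqE)
  thus ?thesis by (metis mem_ball dist_commute)
qed

lemma key:
  assumes s: "s \<in> supp" and a: "absK a \<le> 1" and r: "r > 0"
  shows "emeasure mu {y. smul a s + y \<in> ball c r} = emeasure mu (ball c r)"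
proof -
  define g where "g = (\<lambda>(x1, x2). (x1, smul a x1 + x2))"
  define C where "C = ball s r"
  define B where "B = ball c r"
  define m where "m = emeasure mu {y. smul a s + y \<in> B}"
  have CB: "C \<times> B \<in> sets (mu \<Otimes>\<^sub>M mu)" unfolding C_def B_def by (intro pair_measureI) auto
  have gm: "g \<in> (mu \<Otimes>\<^sub>M mu) \<rightarrow>\<^sub>M (mu \<Otimes>\<^sub>M mu)" unfolding g_def by (rule g_meas)
  have pre: "g -` (C \<times> B) \<inter> space (mu \<Otimes>\<^sub>M mu) \<in> sets (mu \<Otimes>\<^sub>M mu)"
    by (rule measurable_sets[OF gm CB])
  have "emeasure (mu \<Otimes>\<^sub>M mu) (C \<times> B) = emeasure (distr (mu \<Otimes>\<^sub>M mu) (mu \<Otimes>\<^sub>M mu) g) (C \<times> B)"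
    using gauss_a[OF a] unfolding g_def by simp
  also have "\<dots> = emeasure (mu \<Otimes>\<^sub>M mu) (g -` (C \<times> B) \<inter> space (mu \<Otimes>\<^sub>M mu))"
    by (rule emeasure_distr[OF gm CB])
  also have "\<dots> = \<integral>\<^sup>+ x. emeasure mu (Pair x -` (g -` (C \<times> B) \<inter> space (mu \<Otimes>\<^sub>M mu))) \<partial>mu"
    by (rule sigma_finite_measure.emeasure_pair_measure_alt[OF sfin_mu pre])
  also have "\<dots> = \<integral>\<^sup>+ x. m * indicator C x \<partial>mu"
  proof (rule nn_integral_cong)
    fix x
    show "emeasure mu (Pair x -` (g -` (C \<times> B) \<inter> space (mu \<Otimes>\<^sub>M mu))) = m * indicator C x"
    proof (cases "x \<in> C")
      case True
      then have dx: "dist s x < r" unfolding C_def by simp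
      have "Pair x -` (g -` (C \<times> B) \<inter> space (mu \<Otimes>\<^sub>M mu)) = {y. smul a s + y \<in> B}"
        using shift_eq[OF a dx] True unfolding g_def B_def by (auto simp: space_pair_measure)
      thus ?thesis using True unfolding m_def by simp
    next
      case False
      then have "Pair x -` (g -` (C \<times> B) \<inter> space (mu \<Otimes>\<^sub>M mu)) = {}"
        unfolding g_def by auto
      thus ?thesis using False by simp
    qed
  qed
  also have "\<dots> = m * emeasure mu C"
    by (rule nn_integral_cmult_indicator) (simp add: C_def)
  finally have eq: "emeasure mu C * emeasure mu B = m * emeasure mu C"
    using sigma_finite_measure.emeasure_pair_measure_Times[OF sfin_mu, of C mu B]
    unfolding C_def B_def by simp
  have "emeasure mu C > 0" using s r unfolding supp_iff C_def by auto
  then have "emeasure mu C \<noteq> 0" by simp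
  moreover have "emeasure mu C \<noteq> \<top>" using mu_fin by simp
  moreover have "emeasure mu C * emeasure mu B = emeasure mu C * m"
    using eq by (simp only: mult.commute[of m])
  ultimately have "emeasure mu B = m" using ennreal_mult_cancel_left[of "emeasure mu C" "emeasure mu B" m]
    by simp
  thus ?thesis unfolding m_def B_def by simp
qed

definition Inv :: "'e \<Rightarrow> bool" where "Inv t \<longleftrightarrow> distr mu borel (\<lambda>y. t + y) = mu"

lemma supp_Inv:
  assumes s: "s \<in> supp" and a: "absK a \<le> 1"
  shows "Inv (smul a s)"
  unfolding Inv_def
proof (rule measure_eq_balls)
  show "sets (distr mu borel (\<lambda>y. smul a s + y)) = sets borel" by simp
  show "sets mu = sets borel" by simp
  have "emeasure (distr mu borel (\<lambda>y. smul a s + y)) UNIV = emeasure mu UNIV"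
    using emeasure_distr[OF trans_meas, of UNIV] by simp
  thus "emeasure (distr mu borel (\<lambda>y. smul a s + y)) UNIV \<noteq> \<infinity>" using mu_fin by simp
  fix c and r :: real assume r: "r > 0"
  have "emeasure (distr mu borel (\<lambda>y. smul a s + y)) (ball c r) =
        emeasure mu ((\<lambda>y. smul a s + y) -` ball c r \<inter> space mu)"
    by (rule emeasure_distr[OF trans_meas]) simp
  also have "(\<lambda>y. smul a s + y) -` ball c r \<inter> space mu = {y. smul a s + y \<in> ball c r}" by auto
  finally show "emeasure (distr mu borel (\<lambda>y. smul a s + y)) (ball c r) = emeasure mu (ball c r)"
    using key[OF s a r] by simp
qed

end

context gs
begin

lemma Inv_eq:
  assumes t: "Inv t" and B: "B \<in> sets borel"
  shows "emeasure mu {y. t + y \<in> B} = emeasure mu B"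
proof -
  have "emeasure (distr mu borel (\<lambda>y. t + y)) B = emeasure mu ((\<lambda>y. t + y) -` B \<inter> space mu)"
    by (rule emeasure_distr[OF trans_meas B])
  moreover have "(\<lambda>y. t + y) -` B \<inter> space mu = {y. t + y \<in> B}" by auto
  ultimately show ?thesis using t unfolding Inv_def by simp
qed

lemma open_pre: "open U \<Longrightarrow> open {y::'e. t + y \<in> U}"
proof -
  assume U: "open U"
  have "open ((\<lambda>y. t + y) -` U \<inter> UNIV)"
    using cont_add[of t] U continuous_on_open_vimage[of UNIV "\<lambda>y. t + y"] by auto
  moreover have "(\<lambda>y. t + y) -` U \<inter> UNIV = {y. t + y \<in> U}" by auto
  ultimately show ?thesis by simp
qed

lemma Inv_supp:
  assumes t: "Inv t" and x: "x \<in> supp"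
  shows "t + x \<in> supp"
  unfolding supp_iff
proof (intro allI impI)
  fix U assume U: "open U \<and> t + x \<in> U"
  have "emeasure mu {y. t + y \<in> U} > 0"
    using x open_pre[of U t] U unfolding supp_iff by auto
  thus "emeasure mu U > 0" using Inv_eq[OF t] U by (simp add: borel_open)
qed

lemma supp_Inv1: "s \<in> supp \<Longrightarrow> Inv s"
  using supp_Inv[of s 1] by simp

lemma supp_neg: "s \<in> supp \<Longrightarrow> Inv (- s)"
  using supp_Inv[of s "-1"] by (simp add: smul_m1)

lemma supp_0: "0 \<in> supp"
proof -
  obtain s where s: "s \<in> supp" using supp_ne by blast
  have "- s + s \<in> supp" by (rule Inv_supp[OF supp_neg[OF s] s])
  thus ?thesis by simp
qed

lemma Inv_in_supp: "Inv t \<Longrightarrow> t \<in> supp"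
  using Inv_supp[OF _ supp_0, of t] by simp

lemma supp_add: "x \<in> supp \<Longrightarrow> y \<in> supp \<Longrightarrow> x + y \<in> supp"
  using Inv_supp[OF supp_Inv1] by blast

lemma supp_smul: "absK a \<le> 1 \<Longrightarrow> x \<in> supp \<Longrightarrow> smul a x \<in> supp"
  using Inv_in_supp[OF supp_Inv] by blast

lemma supp_minus: "x \<in> supp \<Longrightarrow> - x \<in> supp"
  using Inv_in_supp[OF supp_neg] by blast

lemma supp_Inv_iff: "t \<in> supp \<longleftrightarrow> Inv t"
  using supp_Inv1 Inv_in_supp by blast

lemma supp_shift: "g \<in> supp \<Longrightarrow> (g + y \<in> supp \<longleftrightarrow> y \<in> supp)"
proof
  assume g: "g \<in> supp" and "g + y \<in> supp"
  then have "- g + (g + y) \<in> supp" using supp_add supp_minus by blast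
  thus "y \<in> supp" by (simp add: add.assoc[symmetric])
qed (use supp_add in blast)

lemma supp_compact: "compact supp"
  unfolding compact_eq_totally_bounded
proof (intro conjI allI impI)
  show "Topological_Spaces.complete supp"
    using complete_Int_closed[OF compl supp_closed] by simp
  fix e :: real assume e: "e > 0"
  define mr where "mr = measure mu (supp \<inter> ball 0 e)"
  have sb: "supp \<inter> ball g e \<in> sets mu" for g using supp_borel by auto
  have mr_pos: "mr > 0"
  proof -
    have "emeasure mu (ball 0 e) > 0" using supp_0 e unfolding supp_iff by auto
    moreover have "emeasure mu (ball 0 e) \<le> emeasure mu ((supp \<inter> ball 0 e) \<union> (UNIV - supp))"
      by (rule emeasure_mono) (use supp_borel in auto)
    moreover have "\<dots> \<le> emeasure mu (supp \<inter> ball 0 e) + emeasure mu (UNIV - supp)"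
      by (rule emeasure_subadditive) (use supp_borel in auto)
    ultimately have "emeasure mu (supp \<inter> ball 0 e) > 0" using supp_null by simp
    thus ?thesis unfolding mr_def
      using finite_measure.emeasure_eq_measure[OF fin_mu] by (simp add: ennreal_less_zero_iff)
  qed
  have mr_g: "measure mu (supp \<inter> ball g e) = mr" if g: "g \<in> supp" for g
  proof -
    have "{y. g + y \<in> supp \<inter> ball g e} = supp \<inter> ball 0 e"
      using supp_shift[OF g] by (auto simp: distE)
    then have "emeasure mu (supp \<inter> ball g e) = emeasure mu (supp \<inter> ball 0 e)"
      using Inv_eq[OF supp_Inv1[OF g], of "supp \<inter> ball g e"] supp_borel by auto
    thus ?thesis unfolding mr_def by (simp add: measure_def)
  qed
  define Pr where "Pr F \<longleftrightarrow> finite F \<and> F \<subseteq> supp \<and> (\<forall>f\<in>F. \<forall>f'\<in>F. f \<noteq> f' \<longrightarrow> e \<le> dist f f')"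
    for F :: "'e set"
  define N where "N = nat \<lceil>1 / mr\<rceil> + 1"
  have bound: "card F < N" if "Pr F" for F
  proof -
    have dj: "disjoint_family_on (\<lambda>f. supp \<inter> ball f e) F"
      unfolding disjoint_family_on_def
    proof (intro ballI impI)
      fix f f' assume ff: "f \<in> F" "f' \<in> F" "f \<noteq> f'"
      show "(supp \<inter> ball f e) \<inter> (supp \<inter> ball f' e) = {}"
      proof (rule ccontr)
        assume "(supp \<inter> ball f e) \<inter> (supp \<inter> ball f' e) \<noteq> {}"
        then obtain z where "dist f z < e" "dist f' z < e" by auto
        then have "dist f f' < e" using nrm_tri3[of f f' z] nrm_commute[of f' z] by (simp add: distE)
        thus False using that ff unfolding Pr_def by force
      qed
    qed
    have "measure mu (\<Union>f\<in>F. supp \<inter> ball f e) = (\<Sum>f\<in>F. measure mu (supp \<inter> ball f e))"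
      by (rule measure_finite_Union) (use that dj sb mu_fin in \<open>auto simp: Pr_def\<close>)
    also have "\<dots> = (\<Sum>f\<in>F. mr)" using mr_g that unfolding Pr_def by (intro sum.cong) auto
    also have "\<dots> = real (card F) * mr" by simp
    finally have "real (card F) * mr \<le> 1"
      using prob_space.prob_le_1[OF prob_mu] by metis
    then have "real (card F) \<le> 1 / mr" using mr_pos by (simp add: field_simps)
    also have "\<dots> \<le> real (nat \<lceil>1 / mr\<rceil>)" by linarith
    finally show ?thesis unfolding N_def by linarith
  qed
  have "Pr {}" unfolding Pr_def by simp
  then obtain F where F: "Pr F" and Fmax: "\<And>F'. Pr F' \<Longrightarrow> card F' \<le> card F"
    using ex_has_greatest_nat[of Pr "{}" card N] bound by blast
  show "\<exists>k. finite k \<and> supp \<subseteq> (\<Union>x\<in>k. ball x e)"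
  proof (intro exI[of _ F] conjI)
    show "finite F" using F unfolding Pr_def by simp
    show "supp \<subseteq> (\<Union>x\<in>F. ball x e)"
    proof
      fix g assume g: "g \<in> supp"
      show "g \<in> (\<Union>x\<in>F. ball x e)"
      proof (rule ccontr)
        assume "g \<notin> (\<Union>x\<in>F. ball x e)"
        then have far: "\<forall>f\<in>F. e \<le> dist f g" by (auto simp: not_less)
        then have gF: "g \<notin> F" using e by force
        have "Pr (insert g F)" using F far g unfolding Pr_def by (auto simp: dist_commute)
        then have "card (insert g F) \<le> card F" by (rule Fmax)
        thus False using gF F unfolding Pr_def by simp
      qed
    qed
  qed
qed

end

context gs
begin

lemma X_supp_AE: "AE \<omega> in P. X \<omega> \<in> supp"
proof -
  have "X -` (UNIV - supp) \<inter> space P \<in> sets P" using Xm supp_borel by (auto intro: measurable_sets)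
  moreover have "{\<omega> \<in> space P. \<not> X \<omega> \<in> supp} = X -` (UNIV - supp) \<inter> space P" by auto
  moreover have "emeasure P (X -` (UNIV - supp) \<inter> space P) = 0"
    using supp_null emeasure_distr[OF Xm, of "UNIV - supp"] supp_borel unfolding mu_def by auto
  ultimately show ?thesis using AE_iff_measurable[of "X -` (UNIV - supp) \<inter> space P" P "\<lambda>\<omega>. X \<omega> \<in> supp"]
    by simp
qed

lemma cont_absT: "T \<in> dual_space smul \<Longrightarrow> continuous_on UNIV (\<lambda>y. absK (T y))"
proof -
  assume "T \<in> dual_space smul"
  then have "continuous_on UNIV T" unfolding dual_space_def by blast
  then have "continuous_on UNIV (\<lambda>y. dist (T y) 0)" by (intro continuous_on_dist continuous_on_const)
  thus ?thesis by (simp add: distK)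
qed

lemma absT_meas: "T \<in> dual_space smul \<Longrightarrow> (\<lambda>\<omega>. ereal (absK (T (X \<omega>)))) \<in> borel_measurable P"
  by (intro borel_measurable_ereal borel_measurable_continuous_on[OF cont_absT Xm])

lemma S_char: "x \<in> supp \<longleftrightarrow> (\<forall>T\<in>dual_space smul.
   ereal (absK (T x)) \<le> esssup P (\<lambda>\<omega>. ereal (absK (T (X \<omega>)))))"
proof
  assume x: "x \<in> supp"
  show "\<forall>T\<in>dual_space smul. ereal (absK (T x)) \<le> esssup P (\<lambda>\<omega>. ereal (absK (T (X \<omega>))))"
  proof (intro ballI, rule ccontr)
    fix T assume T: "T \<in> dual_space smul"
    assume "\<not> ereal (absK (T x)) \<le> esssup P (\<lambda>\<omega>. ereal (absK (T (X \<omega>))))"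
    then have "esssup P (\<lambda>\<omega>. ereal (absK (T (X \<omega>)))) < ereal (absK (T x))" by (simp add: not_le)
    then obtain z where z: "esssup P (\<lambda>\<omega>. ereal (absK (T (X \<omega>)))) < ereal z" "ereal z < ereal (absK (T x))"
      using ereal_dense2 by blast
    define U where "U = {y. z < absK (T y)}"
    have oU: "open U" unfolding U_def by (rule open_Collect_less[OF continuous_on_const cont_absT[OF T]])
    have xU: "x \<in> U" using z(2) unfolding U_def by simp
    have pre: "X -` U \<inter> space P \<in> sets P" using Xm oU by (auto intro: measurable_sets)
    have "AE \<omega> in P. ereal (absK (T (X \<omega>))) \<le> esssup P (\<lambda>\<omega>. ereal (absK (T (X \<omega>))))"
      by (rule esssup_AE)
    then have "AE \<omega> in P. ereal (absK (T (X \<omega>))) < ereal z"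
      by eventually_elim (rule le_less_trans[OF _ z(1)])
    then have "AE \<omega> in P. \<not> X \<omega> \<in> U" unfolding U_def
      by eventually_elim (simp add: not_less less_imp_le)
    moreover have "{\<omega> \<in> space P. \<not> \<not> X \<omega> \<in> U} = X -` U \<inter> space P" by auto
    ultimately have "emeasure P (X -` U \<inter> space P) = 0"
      using AE_iff_measurable[OF pre, of "\<lambda>\<omega>. \<not> X \<omega> \<in> U"] by simp
    then have "emeasure mu U = 0" unfolding mu_def using emeasure_distr[OF Xm, of U] oU by auto
    moreover have "emeasure mu U > 0" using x oU xU unfolding supp_iff by blast
    ultimately show False by simp
  qed
next
  assume R: "\<forall>T\<in>dual_space smul. ereal (absK (T x)) \<le> esssup P (\<lambda>\<omega>. ereal (absK (T (X \<omega>))))"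
  show "x \<in> supp"
  proof (rule ccontr)
    assume "x \<notin> supp"
    then obtain T where T: "T \<in> dual_space smul" "\<forall>g\<in>supp. absK (T g) \<le> 1" "absK (T x) > 1"
      using separate[OF supp_closed supp_0 supp_add supp_smul] by blast
    have "esssup P (\<lambda>\<omega>. ereal (absK (T (X \<omega>)))) \<le> 1"
    proof (rule esssup_I[OF absT_meas[OF T(1)]])
      show "AE \<omega> in P. ereal (absK (T (X \<omega>))) \<le> 1"
        using X_supp_AE by eventually_elim (use T(2) in auto)
    qed
    moreover have "ereal (absK (T x)) \<le> esssup P (\<lambda>\<omega>. ereal (absK (T (X \<omega>))))" using R T(1) by blast
    ultimately have "ereal (absK (T x)) \<le> 1" by (rule order_trans[rotated])
    thus False using T(3) by simp
  qed
qed

lemma distr_shift: "distr P borel (\<lambda>\<omega>. x + X \<omega>) = distr mu borel (\<lambda>y. x + y)"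
  unfolding mu_def using distr_distr[OF trans_meas' Xm, of x] by (simp add: comp_def)

lemma subspace_diff: "module.subspace smul M \<Longrightarrow> u \<in> M \<Longrightarrow> v \<in> M \<Longrightarrow> u - v \<in> M"
proof -
  assume M: "module.subspace smul M" "u \<in> M" "v \<in> M"
  have "smul (-1) v \<in> M" using M unfolding module.subspace_def[OF module_smul] by blast
  then have "u + smul (-1) v \<in> M" using M unfolding module.subspace_def[OF module_smul] by blast
  thus ?thesis by (simp add: smul_m1)
qed

lemma zero_one:
  assumes M: "module.subspace smul M" "M \<in> sets borel"
  shows "measure mu M = 0 \<or> measure mu M = 1"
proof -
  define mm where "mm = mu \<Otimes>\<^sub>M mu"
  have pmm: "prob_space mm" unfolding mm_def by (rule prob_space_pair[OF prob_mu prob_mu])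
  have fmm: "finite_measure mm" using pmm by (simp add: prob_space_def)
  obtain pi where pi: "pi \<noteq> 0" "absK pi < 1" "\<And>l. absK l < 1 \<Longrightarrow> absK l \<le> absK pi"
    using discrete by blast
  define E where "E n = (\<lambda>(x1, x2). (x1, smul (pi ^ n) x1 + x2)) -` ((UNIV - M) \<times> M) \<inter> space mm" for n
  define q where "q = measure mu (UNIV - M) * measure mu M"
  have Rset: "(UNIV - M) \<times> M \<in> sets mm" unfolding mm_def using M by (intro pair_measureI) auto
  have absn: "absK (pi ^ n) \<le> 1" for n using pi by (simp add: abs_power power_le_one)
  have Esets: "E n \<in> sets mm" for n
    unfolding E_def mm_def by (rule measurable_sets[OF g_meas Rset[unfolded mm_def]])
  have mE: "measure mm (E n) = q" for n
  proof -
    have "measure mm (E n) = measure (distr mm mm (\<lambda>(x1, x2). (x1, smul (pi ^ n) x1 + x2))) ((UNIV - M) \<times> M)"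
      unfolding E_def mm_def by (rule measure_distr[OF g_meas Rset[unfolded mm_def], symmetric])
    also have "\<dots> = measure mm ((UNIV - M) \<times> M)" using gauss_a[OF absn] unfolding mm_def by simp
    also have "\<dots> = q"
    proof -
      have "emeasure mm ((UNIV - M) \<times> M) = emeasure mu (UNIV - M) * emeasure mu M"
        unfolding mm_def by (rule sigma_finite_measure.emeasure_pair_measure_Times[OF sfin_mu]) (use M in auto)
      thus ?thesis unfolding q_def measure_def by (simp add: enn2real_mult)
    qed
    finally show ?thesis .
  qed
  have disj: "E n \<inter> E m = {}" if "n \<noteq> m" for n m
  proof (rule ccontr)
    assume "E n \<inter> E m \<noteq> {}"
    then obtain x1 x2 where 1: "x1 \<notin> M" "smul (pi ^ n) x1 + x2 \<in> M" "smul (pi ^ m) x1 + x2 \<in> M"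
      unfolding E_def by auto
    have "(smul (pi ^ n) x1 + x2) - (smul (pi ^ m) x1 + x2) \<in> M" using subspace_diff[OF M(1) 1(2,3)] .
    then have "smul (pi ^ n - pi ^ m) x1 \<in> M" by (simp add: V.scale_left_diff_distrib)
    then have "smul (inverse (pi ^ n - pi ^ m)) (smul (pi ^ n - pi ^ m) x1) \<in> M"
      using M(1) unfolding module.subspace_def[OF module_smul] by blast
    moreover have "pi ^ n - pi ^ m \<noteq> 0"
    proof
      assume "pi ^ n - pi ^ m = 0"
      then have "absK pi ^ n = absK pi ^ m" by (simp add: abs_power[symmetric])
      moreover have "0 < absK pi" using abs_pos[OF pi(1)] .
      ultimately show False
      proof (cases "n < m")
        case True
        then have "absK pi ^ m < absK pi ^ n" using power_strict_decreasing_iff[OF \<open>0 < absK pi\<close> pi(2)] by blast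
        thus False using \<open>absK pi ^ n = absK pi ^ m\<close> by simp
      next
        case False
        then have "m < n" using that by simp
        then have "absK pi ^ n < absK pi ^ m" using power_strict_decreasing_iff[OF \<open>0 < absK pi\<close> pi(2)] by blast
        thus False using \<open>absK pi ^ n = absK pi ^ m\<close> by simp
      qed
    qed
    ultimately have "x1 \<in> M" by simp
    thus False using 1 by simp
  qed
  have bnd: "real N * q \<le> 1" for N
  proof -
    have "measure mm (\<Union>n\<in>{..<N}. E n) = (\<Sum>n\<in>{..<N}. measure mm (E n))"
      by (rule finite_measure.finite_measure_finite_Union[OF fmm])
        (use Esets disj in \<open>auto simp: disjoint_family_on_def\<close>)
    also have "\<dots> = real N * q" using mE by simp
    moreover have "measure mm (\<Union>n\<in>{..<N}. E n) \<le> 1" by (rule prob_space.prob_le_1[OF pmm])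
    ultimately show ?thesis by simp
  qed
  have q0: "q \<le> 0"
  proof (rule ccontr)
    assume "\<not> q \<le> 0"
    then have "q > 0" by simp
    obtain N :: nat where "1 / q < N" using reals_Archimedean2 by blast
    then have "1 < real N * q" using \<open>q > 0\<close> by (simp add: field_simps)
    thus False using bnd[of N] by simp
  qed
  have "measure mu (UNIV - M) = 1 - measure mu M"
    using prob_space.prob_compl[OF prob_mu, of M] M by simp
  then have "(1 - measure mu M) * measure mu M \<le> 0" using q0 unfolding q_def by simp
  moreover have "measure mu M \<ge> 0" "measure mu M \<le> 1"
    using prob_space.prob_le_1[OF prob_mu] by auto
  ultimately show ?thesis
  proof -
    assume a: "(1 - measure mu M) * measure mu M \<le> 0" "measure mu M \<ge> 0" "measure mu M \<le> 1"
    show ?thesis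
    proof (rule ccontr)
      assume "\<not> (measure mu M = 0 \<or> measure mu M = 1)"
      then have ne: "measure mu M \<noteq> 0" "measure mu M \<noteq> 1" by simp_all
      have "0 < measure mu M" using a(2) ne(1) by (simp add: less_le)
      moreover have "measure mu M < 1" using a(3) ne(2) by (simp add: less_le)
      ultimately have "0 < (1 - measure mu M) * measure mu M" by simp
      thus False using a by linarith
    qed
  qed
qed

end

context gs
begin

lemma mu_fin': "emeasure mu A \<noteq> top" by (rule finite_measure.emeasure_finite[OF fin_mu])

lemma main_gs:
  "D_submodule absK smul supp \<and>
   (\<forall>x\<in>supp. distr P borel (\<lambda>\<omega>. x + X \<omega>) = distr P borel X) \<and>
   (\<forall>x. x \<notin> supp \<longrightarrow> mutually_singular (distr P borel (\<lambda>\<omega>. x + X \<omega>)) (distr P borel X)) \<and>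
   supp = closed_support (distr P borel X) \<and>
   compact supp \<and>
   normalised_haar_on supp (distr P borel X) \<and>
   (\<forall>M. measurable_vector_subspace smul M \<longrightarrow>
      prob_space.prob P {\<omega> \<in> space P. X \<omega> \<in> M} = (if supp \<subseteq> M then 1 else 0))"
proof (intro conjI allI ballI impI)
  show "D_submodule absK smul supp"
    unfolding D_submodule_def using supp_0 supp_add supp_smul by blast
  show "distr P borel (\<lambda>\<omega>. x + X \<omega>) = distr P borel X" if "x \<in> supp" for x
    using supp_Inv1[OF that] unfolding distr_shift Inv_def mu_def by simp
  show "mutually_singular (distr P borel (\<lambda>\<omega>. x + X \<omega>)) (distr P borel X)" if x: "x \<notin> supp" for x
    unfolding mutually_singular_def
  proof (intro bexI[of _ supp] conjI)
    show "supp \<in> sets (distr P borel (\<lambda>\<omega>. x + X \<omega>)) \<inter> sets (distr P borel X)" using supp_borel by simp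
    have seq: "(\<lambda>y. x + y) -` supp \<inter> space mu = {y. x + y \<in> supp}" by auto
    have "emeasure (distr P borel (\<lambda>\<omega>. x + X \<omega>)) supp = emeasure mu {y. x + y \<in> supp}"
      unfolding distr_shift seq[symmetric] by (rule emeasure_distr[OF trans_meas supp_borel])
    also have "\<dots> \<le> emeasure mu (UNIV - supp)"
    proof (rule emeasure_mono)
      show "{y. x + y \<in> supp} \<subseteq> UNIV - supp"
      proof
        fix y assume "y \<in> {y. x + y \<in> supp}"
        then have "x + y \<in> supp" by simp
        show "y \<in> UNIV - supp"
        proof (rule DiffI[OF UNIV_I], rule notI)
          assume y: "y \<in> supp"
          then have "(x + y) + - y \<in> supp" using supp_add supp_minus \<open>x + y \<in> supp\<close> by blast
          thus False using x by simp
        qed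
      qed
      show "UNIV - supp \<in> sets mu" using supp_borel by simp
    qed
    finally show "emeasure (distr P borel (\<lambda>\<omega>. x + X \<omega>)) supp = 0" using supp_null by simp
    show "emeasure (distr P borel X) (space (distr P borel X) - supp) = 0"
      using supp_null unfolding mu_def by simp
  qed
  show "supp = closed_support (distr P borel X)" unfolding supp_def mu_def ..
  show "compact supp" by (rule supp_compact)
  show "normalised_haar_on supp (distr P borel X)"
    unfolding normalised_haar_on_def
  proof (intro conjI ballI impI)
    show "sets (distr P borel X) = sets borel" by simp
    show "emeasure (distr P borel X) supp = 1" using mu_supp unfolding mu_def .
    show "emeasure (distr P borel X) (space (distr P borel X) - supp) = 0"
      using supp_null unfolding mu_def by simp
    fix x A assume x: "x \<in> supp" and A: "A \<in> sets borel" and AS: "A \<subseteq> supp"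
    have img: "(\<lambda>y. x + y) ` A = {y. - x + y \<in> A}"
    proof (intro equalityI subsetI)
      fix z assume "z \<in> (\<lambda>y. x + y) ` A" thus "z \<in> {y. - x + y \<in> A}" by auto
    next
      fix z assume "z \<in> {y. - x + y \<in> A}"
      then have "- x + z \<in> A" by simp
      moreover have "z = x + (- x + z)" by simp
      ultimately show "z \<in> (\<lambda>y. x + y) ` A" by blast
    qed
    have "img \<in> sets borel" if "img = (\<lambda>y. x + y) ` A" for img using pre_borel[OF A, of "- x"] img that by simp
    then have ib: "(\<lambda>y. x + y) ` A \<in> sets borel" by blast
    have "emeasure mu {y. x + y \<in> (\<lambda>y. x + y) ` A} = emeasure mu ((\<lambda>y. x + y) ` A)"
      by (rule Inv_eq[OF supp_Inv1[OF x] ib])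
    moreover have "{y. x + y \<in> (\<lambda>y. x + y) ` A} = A" by auto
    ultimately show "emeasure (distr P borel X) ((\<lambda>y. x + y) ` A) = emeasure (distr P borel X) A"
      unfolding mu_def by simp
  qed
  fix M assume M: "measurable_vector_subspace smul M"
  then have Ms: "module.subspace smul M" and Mb: "M \<in> sets borel"
    unfolding measurable_vector_subspace_def by auto
  have "prob_space.prob P {\<omega> \<in> space P. X \<omega> \<in> M} = measure P (X -` M \<inter> space P)"
    by (rule arg_cong[where f="measure P"]) auto
  also have "\<dots> = measure mu M" unfolding mu_def by (rule measure_distr[symmetric, OF Xm Mb])
  also have "\<dots> = (if supp \<subseteq> M then 1 else 0)"
  proof (cases "supp \<subseteq> M")
    case True
    have "emeasure mu supp \<le> emeasure mu M" by (rule emeasure_mono[OF True]) (simp add: Mb)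
    moreover have "emeasure mu M \<le> 1" by (rule prob_space.emeasure_le_1[OF prob_mu])
    ultimately have "emeasure mu M = 1" using mu_supp by (simp only: antisym)
    then have "measure mu M = 1" by (simp add: measure_def)
    thus ?thesis using True by simp
  next
    case False
    then obtain s where s: "s \<in> supp" "s \<notin> M" by blast
    have "measure mu M \<noteq> 1"
    proof
      assume m1: "measure mu M = 1"
      then have e1: "emeasure mu M = 1"
        using finite_measure.emeasure_eq_measure[OF fin_mu, of M] by simp
      have e2: "emeasure mu {y. s + y \<in> M} = 1" using Inv_eq[OF supp_Inv1[OF s(1)] Mb] e1 by simp
      have Mb2: "{y. s + y \<in> M} \<in> sets borel" by (rule pre_borel[OF Mb])
      have "emeasure mu (UNIV - M) = emeasure mu UNIV - emeasure mu M"
        by (rule emeasure_Diff) (simp_all add: mu_fin' Mb)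
      then have c1: "emeasure mu (UNIV - M) = 0" using e1 mu_UNIV by simp
      have "emeasure mu (UNIV - {y. s + y \<in> M}) = emeasure mu UNIV - emeasure mu {y. s + y \<in> M}"
        by (rule emeasure_Diff) (simp_all add: mu_fin' Mb2)
      then have c2: "emeasure mu (UNIV - {y. s + y \<in> M}) = 0" using e2 mu_UNIV by simp
      have "M \<inter> {y. s + y \<in> M} \<noteq> {}"
      proof
        assume emp: "M \<inter> {y. s + y \<in> M} = {}"
        have "emeasure mu UNIV \<le> emeasure mu ((UNIV - M) \<union> (UNIV - {y. s + y \<in> M}))"
          by (rule emeasure_mono) (use emp Mb Mb2 in auto)
        also have "\<dots> \<le> emeasure mu (UNIV - M) + emeasure mu (UNIV - {y. s + y \<in> M})"
          by (rule emeasure_subadditive) (use Mb Mb2 in auto)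
        finally show False using c1 c2 mu_UNIV by simp
      qed
      then obtain y where y: "y \<in> M" "s + y \<in> M" by blast
      have "(s + y) - y \<in> M" by (rule subspace_diff[OF Ms y(2) y(1)])
      thus False using s by simp
    qed
    then have "measure mu M = 0" using zero_one[OF Ms Mb] by simp
    thus ?thesis using False by simp
  qed
  finally show "prob_space.prob P {\<omega> \<in> space P. X \<omega> \<in> M} = (if supp \<subseteq> M then 1 else 0)" .
qed

end

theorem theorem4p6:
  fixes absK :: "'k::{field,metric_space} \<Rightarrow> real"
    and smul :: "'k \<Rightarrow> 'e::{ab_group_add,metric_space} \<Rightarrow> 'e"
    and nrm :: "'e \<Rightarrow> real"
    and P :: "'w measure"
    and X :: "'w \<Rightarrow> 'e"
    and S :: "'e set"
  assumes K: "local_field absK"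
    and E: "K_banach_space absK smul nrm"
    and sep: "separable_space TYPE('e)"
    and P: "prob_space P"
    and Xmeas: "X \<in> P \<rightarrow>\<^sub>M borel"
    and gauss: "K_gaussian absK smul P X"
    and S_def: "S = {x. \<forall>T \<in> dual_space smul.
                   ereal (absK (T x)) \<le> esssup P (\<lambda>\<omega>. ereal (absK (T (X \<omega>))))}"
  shows "D_submodule absK smul S \<and>
         (\<forall>x\<in>S. distr P borel (\<lambda>\<omega>. x + X \<omega>) = distr P borel X) \<and>
         (\<forall>x. x \<notin> S \<longrightarrow>
              mutually_singular (distr P borel (\<lambda>\<omega>. x + X \<omega>)) (distr P borel X)) \<and>
         S = closed_support (distr P borel X) \<and>
         compact S \<and>
         normalised_haar_on S (distr P borel X) \<and>
         (\<forall>M. measurable_vector_subspace smul M \<longrightarrow>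
              prob_space.prob P {\<omega> \<in> space P. X \<omega> \<in> M} = (if S \<subseteq> M then 1 else 0))"
proof -
  have kfa: "kf absK" using K by (rule kf.intro)
  have NS: "K_normed_space absK smul nrm" and C: "Topological_Spaces.complete (UNIV :: 'e set)"
    using E unfolding K_banach_space_def by auto
  have nsa: "ns absK smul nrm" by (rule ns.intro[OF kfa]) (rule ns_axioms.intro[OF NS])
  have gsa: "gs absK smul nrm P X"
    by (rule gs.intro[OF nsa]) (rule gs_axioms.intro[OF sep P Xmeas gauss C])
  interpret G: gs absK smul nrm P X by (rule gsa)
  have SS: "S = G.supp" unfolding S_def using G.S_char by blast
  show ?thesis unfolding SS by (rule G.main_gs)
qed

end
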